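(* Let $\Omega$ be a symmetric slice domain in $\mathbb{H}$ and let $F:\Omega\to M_n(\mathbb{H})$ be regular. If there exist $I\in\mathbb{S}$ and $q_0\in\Omega_I$ such that $\Vert F(q)\Vert\le\Vert F(q_0)\Vert$ for all $q\in\Omega$, then there exist constant $n\times n$ quaternionic unitary matrices $U$ and $V$ and a regular matrix-valued function $G:\Omega\to M_{n-1}(\mathbb{H})$ such that $$F(q)=U\begin{bmatrix}\Vert F(q_0)\Vert & 0\\ 0 & G(q)\end{bmatrix}V\quad\text{for all }q\in\Omega.$$
   Context: $\mathbb{H}$ denotes the real quaternions; $\mathbb{S}=\{q\in\mathbb{H}:q^2=-1\}$; for $I\in\mathbb{S}$, $L_I=\mathbb{R}+\mathbb{R}I$ and $\Omega_I=\Omega\cap L_I$. A domain $\Omega$ is a slice domain if it meets the real axis and each $\Omega_I$ is a domain in $L_I$; it is symmetric (axially symmetric) if whenever $x+yI\in\Omega$ ($x,y\in\mathbb{R}$, $I\in\mathbb{S}$) the whole sphere $x+y\mathbb{S}$ lies in $\Omega$. A function $f:\Omega\to\mathbb{H}$ is (left) regular if for each $I\in\mathbb{S}$, $\frac12(\partial_x+I\partial_y)f(x+yI)=0$ on $\Omega_I$; a matrix-valued function is regular if each entry is. $\Vert A\Vert$ denotes the operator norm of $A\in M_n(\mathbb{H})$ with respect to the Euclidean norm $\Vert x\Vert_2=(x^*x)^{1/2}$ on $\mathbb{H}^n$. A matrix $U\in M_n(\mathbb{H})$ is unitary if $U^*U=UU^*=I_n$. *)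

theory Defs
  imports "HOL-Analysis.Analysis"
begin

codatatype quat = Quat (Re: real) (Im1: real) (Im2: real) (Im3: real)

lemma quat_eqI [intro?]:
  "Re x = Re y \<Longrightarrow> Im1 x = Im1 y \<Longrightarrow> Im2 x = Im2 y \<Longrightarrow> Im3 x = Im3 y \<Longrightarrow> x = y"
  by (rule quat.expand) simp

lemma quat_eq_iff: "x = y \<longleftrightarrow> Re x = Re y \<and> Im1 x = Im1 y \<and> Im2 x = Im2 y \<and> Im3 x = Im3 y"
  by (auto intro: quat.expand)

instantiation quat :: ab_group_add
begin
primcorec zero_quat where "Re 0 = 0" | "Im1 0 = 0" | "Im2 0 = 0" | "Im3 0 = 0"
primcorec plus_quat where
  "Re (x + y) = Re x + Re y" | "Im1 (x + y) = Im1 x + Im1 y"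
| "Im2 (x + y) = Im2 x + Im2 y" | "Im3 (x + y) = Im3 x + Im3 y"
primcorec uminus_quat where
  "Re (- x) = - Re x" | "Im1 (- x) = - Im1 x" | "Im2 (- x) = - Im2 x" | "Im3 (- x) = - Im3 x"
primcorec minus_quat where
  "Re (x - y) = Re x - Re y" | "Im1 (x - y) = Im1 x - Im1 y"
| "Im2 (x - y) = Im2 x - Im2 y" | "Im3 (x - y) = Im3 x - Im3 y"
instance by standard (simp_all add: quat_eq_iff)
end

instantiation quat :: ring_1
begin
primcorec one_quat where "Re 1 = 1" | "Im1 1 = 0" | "Im2 1 = 0" | "Im3 1 = 0"
text \<open>Hamilton product, with basis 1, i, j, k and i^2 = j^2 = k^2 = ijk = -1.\<close>
primcorec times_quat where
  "Re (x * y) = Re x * Re y - Im1 x * Im1 y - Im2 x * Im2 y - Im3 x * Im3 y"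
| "Im1 (x * y) = Re x * Im1 y + Im1 x * Re y + Im2 x * Im3 y - Im3 x * Im2 y"
| "Im2 (x * y) = Re x * Im2 y - Im1 x * Im3 y + Im2 x * Re y + Im3 x * Im1 y"
| "Im3 (x * y) = Re x * Im3 y + Im1 x * Im2 y - Im2 x * Im1 y + Im3 x * Re y"
instance by standard (simp_all add: quat_eq_iff algebra_simps)
end

instantiation quat :: real_vector
begin
primcorec scaleR_quat where
  "Re (scaleR r x) = r * Re x" | "Im1 (scaleR r x) = r * Im1 x"
| "Im2 (scaleR r x) = r * Im2 x" | "Im3 (scaleR r x) = r * Im3 x"
instance by standard (simp_all add: quat_eq_iff algebra_simps)
end

instantiation quat :: real_inner
begin
definition inner_quat :: "quat \<Rightarrow> quat \<Rightarrow> real" where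
  "inner x y = Re x * Re y + Im1 x * Im1 y + Im2 x * Im2 y + Im3 x * Im3 y"
definition norm_quat :: "quat \<Rightarrow> real" where
  "norm x = sqrt ((Re x)\<^sup>2 + (Im1 x)\<^sup>2 + (Im2 x)\<^sup>2 + (Im3 x)\<^sup>2)"
definition sgn_quat :: "quat \<Rightarrow> quat" where "sgn_quat x = x /\<^sub>R norm x"
definition dist_quat :: "quat \<Rightarrow> quat \<Rightarrow> real" where "dist_quat x y = norm (x - y)"
definition uniformity_quat :: "(quat \<times> quat) filter" where
  "uniformity_quat = (INF e\<in>{0 <..}. principal {(x, y). dist x y < e})"
definition open_quat :: "quat set \<Rightarrow> bool" where
  "open_quat U \<longleftrightarrow> (\<forall>x\<in>U. \<forall>\<^sub>F (x', y) in uniformity. x' = x \<longrightarrow> y \<in> U)"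
instance
proof
  fix x y z :: quat and r :: real
  show "inner x y = inner y x" by (simp add: inner_quat_def mult.commute)
  show "inner (x + y) z = inner x z + inner y z" by (simp add: inner_quat_def algebra_simps)
  show "inner (scaleR r x) y = r * inner x y" by (simp add: inner_quat_def algebra_simps)
  show "0 \<le> inner x x" by (simp add: inner_quat_def)
  show "inner x x = 0 \<longleftrightarrow> x = 0"
    by (simp add: inner_quat_def quat_eq_iff add_nonneg_eq_0_iff)
  show "norm x = sqrt (inner x x)" by (simp add: norm_quat_def inner_quat_def power2_eq_square)
qed (simp_all add: sgn_quat_def dist_quat_def uniformity_quat_def open_quat_def)
end

primcorec cnj :: "quat \<Rightarrow> quat" where
  "Re (cnj x) = Re x" | "Im1 (cnj x) = - Im1 x" | "Im2 (cnj x) = - Im2 x" | "Im3 (cnj x) = - Im3 x"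

definition qreal :: "real \<Rightarrow> quat" where "qreal r = Quat r 0 0 0"

definition unit_sphere :: "quat set" where "unit_sphere = {q. q * q = - 1}"

definition slice :: "quat set \<Rightarrow> quat \<Rightarrow> quat set" where
  "slice \<Omega> I = {q \<in> \<Omega>. \<exists>x y. q = qreal x + qreal y * I}"

definition symmetric_set :: "quat set \<Rightarrow> bool" where
  "symmetric_set \<Omega> \<longleftrightarrow>
     (\<forall>x y I. I \<in> unit_sphere \<longrightarrow> qreal x + qreal y * I \<in> \<Omega> \<longrightarrow>
        (\<forall>J\<in>unit_sphere. qreal x + qreal y * J \<in> \<Omega>))"

text \<open>Slice domain: a domain (open connected set) meeting the real axis such that each
  Omega_I is a domain in L_I (open and connected, with L_I identified with R^2 via (x,y) \<mapsto> x+yI).\<close>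
definition slice_domain :: "quat set \<Rightarrow> bool" where
  "slice_domain \<Omega> \<longleftrightarrow> open \<Omega> \<and> connected \<Omega> \<and> (\<exists>x. qreal x \<in> \<Omega>) \<and>
     (\<forall>I\<in>unit_sphere.
        open {p :: real \<times> real. qreal (fst p) + qreal (snd p) * I \<in> \<Omega>} \<and>
        connected {p :: real \<times> real. qreal (fst p) + qreal (snd p) * I \<in> \<Omega>})"

definition regular :: "quat set \<Rightarrow> (quat \<Rightarrow> quat) \<Rightarrow> bool" where
  "regular \<Omega> f \<longleftrightarrow>
     (\<forall>I\<in>unit_sphere. \<forall>x y. qreal x + qreal y * I \<in> \<Omega> \<longrightarrow>
        (\<exists>D. ((\<lambda>(s, t). f (qreal s + qreal t * I)) has_derivative D) (at (x, y)) \<and>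
             scaleR (1/2) (D (1, 0) + I * D (0, 1)) = 0))"

text \<open>An n x n matrix is represented as a function  nat \<Rightarrow> nat \<Rightarrow> quat; only the entries with
  indices i, j < n are relevant. Vectors in H^n are functions nat \<Rightarrow> quat (entries i < n).\<close>

definition mat_mult :: "nat \<Rightarrow> (nat \<Rightarrow> nat \<Rightarrow> quat) \<Rightarrow> (nat \<Rightarrow> nat \<Rightarrow> quat) \<Rightarrow> nat \<Rightarrow> nat \<Rightarrow> quat" where
  "mat_mult n A B = (\<lambda>i j. \<Sum>k<n. A i k * B k j)"

definition mat_vec :: "nat \<Rightarrow> (nat \<Rightarrow> nat \<Rightarrow> quat) \<Rightarrow> (nat \<Rightarrow> quat) \<Rightarrow> nat \<Rightarrow> quat" where
  "mat_vec n A x = (\<lambda>i. \<Sum>k<n. A i k * x k)"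

definition mat_adj :: "(nat \<Rightarrow> nat \<Rightarrow> quat) \<Rightarrow> nat \<Rightarrow> nat \<Rightarrow> quat" where
  "mat_adj A = (\<lambda>i j. cnj (A j i))"

definition mat_id :: "nat \<Rightarrow> nat \<Rightarrow> quat" where
  "mat_id = (\<lambda>i j. if i = j then 1 else 0)"

definition mat_eq :: "nat \<Rightarrow> (nat \<Rightarrow> nat \<Rightarrow> quat) \<Rightarrow> (nat \<Rightarrow> nat \<Rightarrow> quat) \<Rightarrow> bool" where
  "mat_eq n A B \<longleftrightarrow> (\<forall>i<n. \<forall>j<n. A i j = B i j)"

definition unitary :: "nat \<Rightarrow> (nat \<Rightarrow> nat \<Rightarrow> quat) \<Rightarrow> bool" where
  "unitary n U \<longleftrightarrow> mat_eq n (mat_mult n (mat_adj U) U) mat_id \<and> mat_eq n (mat_mult n U (mat_adj U)) mat_id"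

definition vec_norm :: "nat \<Rightarrow> (nat \<Rightarrow> quat) \<Rightarrow> real" where
  "vec_norm n x = sqrt (\<Sum>i<n. (norm (x i))\<^sup>2)"

definition op_norm :: "nat \<Rightarrow> (nat \<Rightarrow> nat \<Rightarrow> quat) \<Rightarrow> real" where
  "op_norm n A = (SUP x\<in>{x. vec_norm n x \<le> 1}. vec_norm n (mat_vec n A x))"

definition mat_regular :: "nat \<Rightarrow> quat set \<Rightarrow> (quat \<Rightarrow> nat \<Rightarrow> nat \<Rightarrow> quat) \<Rightarrow> bool" where
  "mat_regular n \<Omega> F \<longleftrightarrow> (\<forall>i<n. \<forall>j<n. regular \<Omega> (\<lambda>q. F q i j))"

definition block_diag :: "quat \<Rightarrow> (nat \<Rightarrow> nat \<Rightarrow> quat) \<Rightarrow> nat \<Rightarrow> nat \<Rightarrow> quat" where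
  "block_diag c G = (\<lambda>i j. if i = 0 \<and> j = 0 then c
                           else if i = 0 \<or> j = 0 then 0 else G (i - 1) (j - 1))"

end

theory Submission
  imports Defs "HOL-Complex_Analysis.Complex_Analysis"
begin


instantiation quat :: inverse
begin
definition inverse_quat :: "quat \<Rightarrow> quat" where
  "inverse_quat x = scaleR (inverse ((quat.Re x)\<^sup>2 + (Im1 x)\<^sup>2 + (Im2 x)\<^sup>2 + (Im3 x)\<^sup>2)) (cnj x)"
definition divide_quat :: "quat \<Rightarrow> quat \<Rightarrow> quat" where
  "divide_quat x y = x * inverse y"
instance ..
end

lemma norm_quat_sq: "(norm x)\<^sup>2 = (quat.Re x)\<^sup>2 + (Im1 x)\<^sup>2 + (Im2 x)\<^sup>2 + (Im3 x)\<^sup>2"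
  by (simp add: norm_quat_def)

lemma cnj_mult_self: "cnj x * x = scaleR ((quat.Re x)\<^sup>2 + (Im1 x)\<^sup>2 + (Im2 x)\<^sup>2 + (Im3 x)\<^sup>2) 1"
  by (simp add: quat_eq_iff power2_eq_square algebra_simps)
lemma mult_cnj_self: "x * cnj x = scaleR ((quat.Re x)\<^sup>2 + (Im1 x)\<^sup>2 + (Im2 x)\<^sup>2 + (Im3 x)\<^sup>2) 1"
  by (simp add: quat_eq_iff power2_eq_square algebra_simps)

lemma quat_scaleR_mult_left: "scaleR a x * (y::quat) = scaleR a (x * y)"
  by (simp add: quat_eq_iff algebra_simps)
lemma quat_scaleR_mult_right: "x * scaleR a (y::quat) = scaleR a (x * y)"
  by (simp add: quat_eq_iff algebra_simps)

lemma quat_nz_sq: "(x::quat) \<noteq> 0 \<Longrightarrow> (quat.Re x)\<^sup>2 + (Im1 x)\<^sup>2 + (Im2 x)\<^sup>2 + (Im3 x)\<^sup>2 \<noteq> 0"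
  by (simp add: quat_eq_iff add_nonneg_eq_0_iff)

instance quat :: real_normed_div_algebra
proof intro_classes
  fix x :: quat assume "x \<noteq> 0"
  from quat_nz_sq[OF this] show "inverse x * x = 1"
    unfolding inverse_quat_def by (simp add: cnj_mult_self quat_scaleR_mult_left)
next
  fix x :: quat assume "x \<noteq> 0"
  from quat_nz_sq[OF this] show "x * inverse x = 1"
    unfolding inverse_quat_def by (simp add: mult_cnj_self quat_scaleR_mult_right)
next
  fix x y :: quat show "x / y = x * inverse y" by (simp add: divide_quat_def)
next
  show "inverse (0::quat) = 0" by (simp add: inverse_quat_def quat_eq_iff)
next
  fix a :: real and x y :: quat
  show "scaleR a x * y = scaleR a (x * y)" by (simp add: quat_eq_iff algebra_simps)
next
  fix a :: real and x y :: quat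
  show "x * scaleR a y = scaleR a (x * y)" by (simp add: quat_eq_iff algebra_simps)
next
  fix x y :: quat
  show "norm (x * y) = norm x * norm y"
    unfolding norm_quat_def real_sqrt_mult[symmetric]
    by (rule arg_cong[where f=sqrt]) (simp add: power2_eq_square algebra_simps)
qed


instantiation quat :: euclidean_space
begin
definition Basis_quat :: "quat set" where
  "Basis_quat = {Quat 1 0 0 0, Quat 0 1 0 0, Quat 0 0 1 0, Quat 0 0 0 1}"
instance
proof
  show "(Basis :: quat set) \<noteq> {}" by (simp add: Basis_quat_def)
  show "finite (Basis :: quat set)" by (simp add: Basis_quat_def)
next
  fix u v :: quat assume "u \<in> Basis" "v \<in> Basis"
  then show "inner u v = (if u = v then 1 else 0)"
    unfolding Basis_quat_def by (elim insertE emptyE) (simp_all add: inner_quat_def)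
next
  fix x :: quat
  show "(\<forall>u\<in>Basis. inner x u = 0) = (x = 0)"
    unfolding Basis_quat_def by (simp add: inner_quat_def) (auto intro: quat_eqI)
qed
end


lemma qreal_of_real: "qreal x = of_real x"
  by (simp add: qreal_def of_real_def quat_eq_iff)

lemma of_real_quat_comm: "of_real r * (x::quat) = x * of_real r"
  by (simp add: of_real_def)

lemma cnj_cnj[simp]: "cnj (cnj x) = x" by (simp add: quat_eq_iff)
lemma cnj_mult: "cnj (x * y) = cnj y * cnj x" by (simp add: quat_eq_iff)
lemma cnj_add[simp]: "cnj (x + y) = cnj x + cnj y" by (simp add: quat_eq_iff)
lemma cnj_diff[simp]: "cnj (x - y) = cnj x - cnj y" by (simp add: quat_eq_iff)
lemma cnj_minus[simp]: "cnj (- x) = - cnj x" by (simp add: quat_eq_iff)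
lemma cnj_zero[simp]: "cnj 0 = 0" by (simp add: quat_eq_iff)
lemma cnj_one[simp]: "cnj 1 = 1" by (simp add: quat_eq_iff)
lemma cnj_of_real[simp]: "cnj (of_real r) = of_real r" by (simp add: quat_eq_iff of_real_def)
lemma cnj_scaleR[simp]: "cnj (scaleR r x) = scaleR r (cnj x)" by (simp add: quat_eq_iff)
lemma cnj_sum: "cnj (sum f A) = sum (\<lambda>i. cnj (f i)) A"
  by (induction A rule: infinite_finite_induct) auto
lemma norm_cnj[simp]: "norm (cnj x) = norm x" by (simp add: norm_quat_def)
lemma cnj_eq_0_iff[simp]: "cnj x = 0 \<longleftrightarrow> x = 0" by (auto simp: quat_eq_iff)

lemma inner_quat_Re: "inner x y = quat.Re (x * cnj y)"
  by (simp add: inner_quat_def)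
lemma Re_mult_comm: "quat.Re (x * y) = quat.Re (y * x)"
  by simp
lemma Re_add[simp]: "quat.Re (x + y) = quat.Re x + quat.Re y" by simp
lemma norm_mult_self_quat: "norm x * norm x = quat.Re x * quat.Re x + Im1 x * Im1 x + Im2 x * Im2 x + Im3 x * Im3 x"
  using norm_quat_sq[of x] by (simp add: power2_eq_square)

lemma Re_mult_cnj_self: "quat.Re (x * cnj x) = (norm x)\<^sup>2"
  by (simp add: norm_mult_self_quat power2_eq_square)
lemma Re_cnj_mult_self: "quat.Re (cnj x * x) = (norm x)\<^sup>2"
  by (simp add: norm_mult_self_quat power2_eq_square)
lemma mult_cnj_self_real: "x * cnj x = of_real ((norm x)\<^sup>2)"
  by (simp add: quat_eq_iff norm_mult_self_quat power2_eq_square of_real_def)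
lemma cnj_mult_self_real: "cnj x * x = of_real ((norm x)\<^sup>2)"
  by (simp add: quat_eq_iff norm_mult_self_quat power2_eq_square of_real_def)
lemma Re_of_real[simp]: "quat.Re (of_real r) = r" by (simp add: of_real_def)
lemma Re_sum: "quat.Re (sum f A) = sum (\<lambda>i. quat.Re (f i)) A"
  by (induction A rule: infinite_finite_induct) auto

lemma unit_sphere_comps:
  assumes "J \<in> unit_sphere"
  shows "quat.Re J = 0" "(Im1 J)\<^sup>2 + (Im2 J)\<^sup>2 + (Im3 J)\<^sup>2 = 1"
proof -
  have e: "quat.Re J * quat.Re J - Im1 J * Im1 J - Im2 J * Im2 J - Im3 J * Im3 J = -1"
     "quat.Re J * Im1 J = 0" "quat.Re J * Im2 J = 0" "quat.Re J * Im3 J = 0"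
    using assms by (auto simp: unit_sphere_def quat_eq_iff algebra_simps)
  show r: "quat.Re J = 0"
  proof (rule ccontr)
    assume "quat.Re J \<noteq> 0"
    then have "Im1 J = 0" "Im2 J = 0" "Im3 J = 0" using e by auto
    then have "quat.Re J * quat.Re J = -1" using e by simp
    moreover have "quat.Re J * quat.Re J \<ge> 0" by simp
    ultimately show False by linarith
  qed
  show "(Im1 J)\<^sup>2 + (Im2 J)\<^sup>2 + (Im3 J)\<^sup>2 = 1" using e r by (simp add: power2_eq_square)
qed

lemma unit_sphere_norm: "J \<in> unit_sphere \<Longrightarrow> norm J = 1"
  using unit_sphere_comps[of J] by (simp add: norm_quat_def)

lemma unit_sphere_cnj: "J \<in> unit_sphere \<Longrightarrow> cnj J = - J"
  using unit_sphere_comps[of J] by (simp add: quat_eq_iff)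

lemma unit_sphere_sq: "J \<in> unit_sphere \<Longrightarrow> J * J = -1"
  by (simp add: unit_sphere_def)

lemma unit_sphere_neg: "J \<in> unit_sphere \<Longrightarrow> - J \<in> unit_sphere"
  by (simp add: unit_sphere_def)

lemma unit_sphere_ne0: "J \<in> unit_sphere \<Longrightarrow> J \<noteq> 0"
  using unit_sphere_norm by force

definition cpx :: "quat \<Rightarrow> quat \<Rightarrow> complex" where
  "cpx J q = Complex (quat.Re q) (inner q J)"

lemma cpx_form: "cpx J = (\<lambda>q. of_real (inner q 1) + \<i> * of_real (inner q J))"
  by (rule ext) (simp add: cpx_def complex_eq_iff inner_quat_def)

lemma bounded_linear_cpx: "bounded_linear (cpx J)"
  unfolding cpx_form
  by (intro bounded_linear_add bounded_linear_compose[OF bounded_linear_of_real]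
        bounded_linear_compose[OF bounded_linear_mult_right] bounded_linear_inner_left)

lemma cpx_mult_J:
  assumes "J \<in> unit_sphere" shows "cpx J (J * q) = \<i> * cpx J q"
proof -
  note c = unit_sphere_comps[OF assms]
  have 1: "quat.Re (J * q) = - inner q J" using c(1) by (simp add: inner_quat_def)
  have "inner (J * q) J = quat.Re q * ((Im1 J)\<^sup>2 + (Im2 J)\<^sup>2 + (Im3 J)\<^sup>2)"
    using c(1) by (simp add: inner_quat_def algebra_simps power2_eq_square)
  then have 2: "inner (J * q) J = quat.Re q" using c(2) by simp
  show ?thesis using 1 2 by (simp add: cpx_def complex_eq_iff)
qed


definition scr :: "quat \<Rightarrow> (real \<times> real) set \<Rightarrow> (real \<times> real \<Rightarrow> quat) \<Rightarrow> bool" where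
  "scr J U h \<longleftrightarrow> (\<forall>p\<in>U. \<exists>D. (h has_derivative D) (at p) \<and> D (1,0) + J * D (0,1) = 0)"

lemma bounded_linear_ReIm: "bounded_linear (\<lambda>z::complex. (Complex.Re z, Im z))"
  by (intro bounded_linear_Pair Complex.bounded_linear_Re bounded_linear_Im)

lemma bl_pair_decomp:
  assumes "bounded_linear D"
  shows "D (a, b) = a *\<^sub>R D (1,0) + b *\<^sub>R D (0,1)"
proof -
  have "(a, b) = a *\<^sub>R (1::real,0::real) + b *\<^sub>R (0,1)" by simp
  then have "D (a, b) = D (a *\<^sub>R (1::real,0::real) + b *\<^sub>R (0,1))" by simp
  also have "\<dots> = a *\<^sub>R D (1,0) + b *\<^sub>R D (0,1)"
    by (simp only: linear_add[OF bounded_linear.linear[OF assms]] linear_scale[OF bounded_linear.linear[OF assms]])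
  finally show ?thesis .
qed

lemma cpx_scaleR: "cpx J (a *\<^sub>R x) = of_real a * cpx J x"
  by (simp add: cpx_def complex_eq_iff)
lemma cpx_add: "cpx J (x + y) = cpx J x + cpx J y"
  by (simp add: cpx_def complex_eq_iff inner_add_left)
lemma cpx_minus: "cpx J (- x) = - cpx J x"
  by (simp add: cpx_def complex_eq_iff)

lemma scr_holo:
  assumes J: "J \<in> unit_sphere" and h: "scr J U h"
  shows "(\<lambda>z. cpx J (h (Complex.Re z, Im z))) holomorphic_on {z. (Complex.Re z, Im z) \<in> U}"
  unfolding holomorphic_on_def
proof
  fix z assume "z \<in> {z. (Complex.Re z, Im z) \<in> U}"
  then obtain D where D: "(h has_derivative D) (at (Complex.Re z, Im z))" and cr: "D (1,0) + J * D (0,1) = 0"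
    using h by (auto simp: scr_def)
  have lin: "bounded_linear D" using D by (rule has_derivative_bounded_linear)
  have rz: "((\<lambda>z. (Complex.Re z, Im z)) has_derivative (\<lambda>w. (Complex.Re w, Im w))) (at z)"
    by (rule bounded_linear_imp_has_derivative[OF bounded_linear_ReIm])
  have hd: "((\<lambda>z. h (Complex.Re z, Im z)) has_derivative (\<lambda>w. D (Complex.Re w, Im w))) (at z)"
    by (rule has_derivative_compose[OF rz D])
  have cd: "((\<lambda>z. cpx J (h (Complex.Re z, Im z))) has_derivative (\<lambda>w. cpx J (D (Complex.Re w, Im w)))) (at z)"
    by (rule bounded_linear.has_derivative[OF bounded_linear_cpx hd])
  define c where "c = cpx J (D (1,0))"
  have d10: "D (1,0) = - (J * D (0,1))" using cr by (simp add: eq_neg_iff_add_eq_0)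
  have c01: "cpx J (D (0,1)) = \<i> * c"
  proof -
    have "c = - (\<i> * cpx J (D (0,1)))" unfolding c_def d10 cpx_minus cpx_mult_J[OF J] ..
    then show ?thesis by (simp add: algebra_simps)
  qed
  have eq: "(\<lambda>w. cpx J (D (Complex.Re w, Im w))) = (\<lambda>w. c * w)"
  proof
    fix w :: complex
    have "cpx J (D (Complex.Re w, Im w)) = of_real (Complex.Re w) * c + of_real (Im w) * (\<i> * c)"
      unfolding bl_pair_decomp[OF lin, of "Complex.Re w" "Im w"] cpx_add cpx_scaleR c01 c_def ..
    also have "\<dots> = c * w" by (simp add: complex_eq_iff algebra_simps)
    finally show "cpx J (D (Complex.Re w, Im w)) = c * w" .
  qed
  have "((\<lambda>z. cpx J (h (Complex.Re z, Im z))) has_field_derivative c) (at z)"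
    unfolding has_field_derivative_def using cd eq by simp
  then show "(\<lambda>z. cpx J (h (Complex.Re z, Im z))) field_differentiable at z within {z. (Complex.Re z, Im z) \<in> U}"
    unfolding field_differentiable_def by (metis has_field_derivative_at_within)
qed

lemma scr_mult_right:
  assumes "scr J U h" shows "scr J U (\<lambda>p. h p * w)"
  unfolding scr_def
proof
  fix p assume "p \<in> U"
  then obtain D where D: "(h has_derivative D) (at p)" "D (1,0) + J * D (0,1) = 0"
    using assms by (auto simp: scr_def)
  have "((\<lambda>p. h p * w) has_derivative (\<lambda>x. D x * w)) (at p)"
    by (rule has_derivative_mult_left[OF D(1)])
  moreover have "D (1,0) * w + J * (D (0,1) * w) = 0"
    using D(2) by (metis distrib_right mult.assoc mult_zero_left)
  ultimately show "\<exists>D. ((\<lambda>p. h p * w) has_derivative D) (at p) \<and> D (1,0) + J * D (0,1) = 0"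
    by blast
qed

lemma cpx_Re: "Complex.Re (cpx J q) = quat.Re q"
  by (simp add: cpx_def)

definition cset :: "(real \<times> real) set \<Rightarrow> complex set" where
  "cset U = {z. (Complex.Re z, Im z) \<in> U}"

lemma cset_open: "open U \<Longrightarrow> open (cset U)"
  unfolding cset_def
  using continuous_open_vimage[of U "\<lambda>z::complex. (Complex.Re z, Im z)"]
    linear_continuous_at[OF bounded_linear_ReIm]
  by (simp add: vimage_def)

lemma cset_connected: "connected U \<Longrightarrow> connected (cset U)"
proof -
  assume c: "connected U"
  have "cset U = (\<lambda>p. Complex (fst p) (snd p)) ` U"
    unfolding cset_def by (force simp: image_iff)
  moreover have "continuous_on U (\<lambda>p. Complex (fst p) (snd p))"
  proof -
    have "(\<lambda>p. Complex (fst p) (snd p)) = (\<lambda>p. of_real (fst p) + \<i> * of_real (snd p))"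
      by (rule ext) (simp add: complex_eq_iff)
    then show ?thesis by (simp add: continuous_intros)
  qed
  ultimately show ?thesis using connected_continuous_image c by metis
qed

lemma cset_limpt:
  assumes "open U" "(x0, 0) \<in> U"
  shows "Complex x0 0 islimpt {z \<in> cset U. Im z = 0}"
proof -
  have "Complex x0 0 \<in> cset U" using assms by (simp add: cset_def)
  then obtain r where r: "r > 0" "ball (Complex x0 0) r \<subseteq> cset U"
    using cset_open[OF assms(1)] open_contains_ball by blast
  show ?thesis
    unfolding islimpt_approachable
  proof (intro allI impI)
    fix e :: real assume e: "e > 0"
    define x' where "x' = Complex (x0 + min e r / 2) 0"
    have "x' - Complex x0 0 = of_real (min e r / 2)" by (simp add: x'_def complex_eq_iff)
    then have d: "dist x' (Complex x0 0) = min e r / 2"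
      using e r unfolding dist_norm by (simp only: norm_of_real)
    then have "x' \<in> ball (Complex x0 0) r" using e r by (simp add: dist_commute)
    then have "x' \<in> cset U" using r by blast
    moreover have "x' \<noteq> Complex x0 0" using e r by (simp add: x'_def)
    moreover have "dist x' (Complex x0 0) < e" using d e r by simp
    ultimately show "\<exists>x'\<in>{z \<in> cset U. Im z = 0}. x' \<noteq> Complex x0 0 \<and> dist x' (Complex x0 0) < e"
      by (auto simp: x'_def intro!: bexI[of _ x'])
  qed
qed

lemma scr_identity:
  assumes J: "J \<in> unit_sphere" and U: "open U" "connected U" and h: "scr J U h"
    and x0: "(x0, 0) \<in> U" and z: "\<And>x. (x,0) \<in> U \<Longrightarrow> h (x,0) = 0" and p: "p \<in> U"
  shows "h p = 0"
proof -
  have "quat.Re (h p * w) = 0" for w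
  proof -
    have hol: "(\<lambda>z. cpx J (h (Complex.Re z, Im z) * w)) holomorphic_on cset U"
      unfolding cset_def by (rule scr_holo[OF J scr_mult_right[OF h]])
    have "cpx J (h (Complex.Re (Complex (fst p) (snd p)), Im (Complex (fst p) (snd p))) * w) = 0"
    proof (rule analytic_continuation[OF hol cset_open[OF U(1)] cset_connected[OF U(2)] _ _ cset_limpt[OF U(1) x0]])
      show "{z \<in> cset U. Im z = 0} \<subseteq> cset U" by blast
      show "Complex x0 0 \<in> cset U" using x0 by (simp add: cset_def)
      show "Complex (fst p) (snd p) \<in> cset U" using p by (simp add: cset_def)
      fix z assume "z \<in> {z \<in> cset U. Im z = 0}"
      then have "(Complex.Re z, 0) \<in> U" "Im z = 0" by (auto simp: cset_def)
      then show "cpx J (h (Complex.Re z, Im z) * w) = 0" using z by (simp add: cpx_def complex_eq_iff)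
    qed
    then show ?thesis by (simp add: cpx_def complex_eq_iff)
  qed
  from this[of "cnj (h p)"] have "(norm (h p))\<^sup>2 = 0" unfolding Re_mult_cnj_self .
  then show ?thesis by simp
qed

lemma scr_max:
  assumes J: "J \<in> unit_sphere" and U: "open U" "connected U" and h: "scr J U h"
    and p0: "p0 \<in> U" and le: "\<And>p. p \<in> U \<Longrightarrow> quat.Re (h p) \<le> quat.Re (h p0)" and p: "p \<in> U"
  shows "quat.Re (h p) = quat.Re (h p0)"
proof -
  define f where "f = (\<lambda>z. exp (cpx J (h (Complex.Re z, Im z))))"
  have hol: "f holomorphic_on cset U"
    unfolding f_def cset_def using scr_holo[OF J h] by (intro holomorphic_intros) auto
  have nf: "norm (f z) = exp (quat.Re (h (Complex.Re z, Im z)))" for z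
    by (simp add: f_def norm_exp_eq_Re cpx_Re)
  have "f constant_on cset U"
  proof (rule maximum_modulus_principle[OF hol cset_open[OF U(1)] cset_connected[OF U(2)] cset_open[OF U(1)] order_refl])
    show "Complex (fst p0) (snd p0) \<in> cset U" using p0 by (simp add: cset_def)
    fix z assume "z \<in> cset U"
    then show "norm (f z) \<le> norm (f (Complex (fst p0) (snd p0)))"
      using le[of "(Complex.Re z, Im z)"] by (simp add: nf cset_def)
  qed
  then have "f (Complex (fst p) (snd p)) = f (Complex (fst p0) (snd p0))"
    using p p0 by (auto simp: constant_on_def cset_def)
  then have "norm (f (Complex (fst p) (snd p))) = norm (f (Complex (fst p0) (snd p0)))" by simp
  then show ?thesis by (simp add: nf)
qed


definition sl :: "quat \<Rightarrow> real \<times> real \<Rightarrow> quat" where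
  "sl J p = of_real (fst p) + of_real (snd p) * J"

definition US :: "quat set \<Rightarrow> quat \<Rightarrow> (real \<times> real) set" where
  "US \<Omega> J = {p. sl J p \<in> \<Omega>}"

lemma regular_iff_scr: "regular \<Omega> f \<longleftrightarrow> (\<forall>J\<in>unit_sphere. scr J (US \<Omega> J) (\<lambda>p. f (sl J p)))"
proof -
  have e: "(\<lambda>(s, t). f (qreal s + qreal t * J)) = (\<lambda>p. f (sl J p))" for J
    by (auto simp: sl_def qreal_of_real)
  have h: "(scaleR (1/2) (X::quat) = 0) = (X = 0)" for X by simp
  show ?thesis
    unfolding regular_def scr_def US_def e h
    by (auto simp: sl_def qreal_of_real)
qed

lemma scr_const: "scr J U (\<lambda>p. c)"
  unfolding scr_def by (auto intro!: exI[of _ "\<lambda>_. 0"])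

lemma scr_add:
  assumes "scr J U f" "scr J U g" shows "scr J U (\<lambda>p. f p + g p)"
  unfolding scr_def
proof
  fix p assume "p \<in> U"
  obtain D where D: "(f has_derivative D) (at p)" "D (1,0) + J * D (0,1) = 0"
    using assms(1) \<open>p \<in> U\<close> by (auto simp: scr_def)
  obtain E where E: "(g has_derivative E) (at p)" "E (1,0) + J * E (0,1) = 0"
    using assms(2) \<open>p \<in> U\<close> by (auto simp: scr_def)
  have "((\<lambda>p. f p + g p) has_derivative (\<lambda>x. D x + E x)) (at p)"
    by (rule has_derivative_add[OF D(1) E(1)])
  moreover have "(D (1,0) + E (1,0)) + J * (D (0,1) + E (0,1)) = 0"
    using D(2) E(2) by (simp add: algebra_simps)
  ultimately show "\<exists>D. ((\<lambda>p. f p + g p) has_derivative D) (at p) \<and> D (1,0) + J * D (0,1) = 0"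
    by blast
qed

lemma scr_uminus:
  assumes "scr J U f" shows "scr J U (\<lambda>p. - f p)"
  using scr_mult_right[OF assms, of "-1"] by simp

lemma scr_diff:
  assumes "scr J U f" "scr J U g" shows "scr J U (\<lambda>p. f p - g p)"
  using scr_add[OF assms(1) scr_uminus[OF assms(2)]] by simp

lemma scr_sum:
  assumes "\<And>i. i \<in> A \<Longrightarrow> scr J U (f i)" shows "scr J U (\<lambda>p. \<Sum>i\<in>A. f i p)"
  using assms
proof (induction A rule: infinite_finite_induct)
  case (infinite A) then show ?case by (simp add: scr_const)
next
  case empty then show ?case by (simp add: scr_const)
next
  case (insert x F) then show ?case by (simp add: scr_add)
qed

lemma regular_const: "regular \<Omega> (\<lambda>q. c)"
  unfolding regular_iff_scr by (simp add: scr_const)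

lemma regular_add: "regular \<Omega> f \<Longrightarrow> regular \<Omega> g \<Longrightarrow> regular \<Omega> (\<lambda>q. f q + g q)"
  unfolding regular_iff_scr by (simp add: scr_add)

lemma regular_diff: "regular \<Omega> f \<Longrightarrow> regular \<Omega> g \<Longrightarrow> regular \<Omega> (\<lambda>q. f q - g q)"
  unfolding regular_iff_scr by (simp add: scr_diff)

lemma regular_mult_right: "regular \<Omega> f \<Longrightarrow> regular \<Omega> (\<lambda>q. f q * w)"
  unfolding regular_iff_scr by (simp add: scr_mult_right)

lemma regular_real_left: "regular \<Omega> f \<Longrightarrow> regular \<Omega> (\<lambda>q. of_real r * f q)"
  unfolding of_real_quat_comm by (rule regular_mult_right)

lemma regular_sum: "(\<And>i. i \<in> A \<Longrightarrow> regular \<Omega> (f i)) \<Longrightarrow> regular \<Omega> (\<lambda>q. \<Sum>i\<in>A. f i q)"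
  unfolding regular_iff_scr by (simp add: scr_sum)

lemma sl_real: "sl J (x, 0) = of_real x"
  by (simp add: sl_def)

lemma sl_neg: "sl (- J) (x, y) = sl J (x, - y)"
  by (simp add: sl_def)

lemma pure_imag_sq:
  assumes "quat.Re v = 0" shows "v * v = - of_real ((norm v)\<^sup>2)"
  using assms by (simp add: quat_eq_iff norm_mult_self_quat power2_eq_square of_real_def)

lemma slice_rep:
  assumes "I \<in> unit_sphere"
  shows "\<exists>J\<in>unit_sphere. \<exists>x y. q = sl J (x, y)"
proof (cases "q - of_real (quat.Re q) = 0")
  case True
  then have "q = sl I (quat.Re q, 0)" by (simp add: sl_def)
  then show ?thesis using assms by blast
next
  case False
  define v where "v = q - of_real (quat.Re q)"
  have v0: "v \<noteq> 0" using False by (simp add: v_def)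
  have rv: "quat.Re v = 0" by (simp add: v_def)
  define J where "J = scaleR (1 / norm v) v"
  have "J * J = scaleR (1 / norm v) (scaleR (1 / norm v) (v * v))"
    by (simp add: J_def)
  also have "\<dots> = - of_real ((1 / norm v) * (1 / norm v) * (norm v)\<^sup>2)"
    by (simp add: pure_imag_sq[OF rv] of_real_def)
  also have "\<dots> = -1" using v0 by (simp add: power2_eq_square)
  finally have J: "J \<in> unit_sphere" by (simp add: unit_sphere_def)
  have "q = sl J (quat.Re q, norm v)"
    using v0 by (simp add: sl_def J_def v_def scaleR_conv_of_real[symmetric])
  then show ?thesis using J by blast
qed


definition "qi = Quat 0 1 0 0"
definition "qj = Quat 0 0 1 0"
definition "qk = Quat 0 0 0 1"

lemma qijk_sphere: "qi \<in> unit_sphere" "qj \<in> unit_sphere" "qk \<in> unit_sphere"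
  by (simp_all add: unit_sphere_def qi_def qj_def qk_def quat_eq_iff)

definition ebase :: "nat \<Rightarrow> quat" where
  "ebase m = (if m = 0 then 1 else if m = 1 then qi else if m = 2 then qj else qk)"

lemma sum4: "(\<Sum>m<(4::nat). f m) = f 0 + f 1 + f 2 + (f 3 :: 'a::comm_monoid_add)"
  by (simp add: eval_nat_numeral ac_simps)

lemma quat_tensor_zero:
  assumes "\<And>a. a \<in> {1, qi, qj, qk} \<Longrightarrow> (\<Sum>m<4. ebase m * (a * X m)) = 0"
  shows "\<forall>m<4. X m = 0"
proof -
  have "X 0 + qi * X 1 + qj * X 2 + qk * X 3 = 0"
    "qi * X 0 + qi * (qi * X 1) + qj * (qi * X 2) + qk * (qi * X 3) = 0"
    "qj * X 0 + qi * (qj * X 1) + qj * (qj * X 2) + qk * (qj * X 3) = 0"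
    "qk * X 0 + qi * (qk * X 1) + qj * (qk * X 2) + qk * (qk * X 3) = 0"
    using assms[of 1] assms[of qi] assms[of qj] assms[of qk] by (simp_all add: sum4 ebase_def)
  then have "X 0 = 0 \<and> X 1 = 0 \<and> X 2 = 0 \<and> X 3 = 0"
    by (simp add: quat_eq_iff qi_def qj_def qk_def)
  then show ?thesis by (auto simp: less_Suc_eq numeral_eq_Suc)
qed

definition Pf :: "quat \<Rightarrow> (quat \<Rightarrow> quat) \<Rightarrow> real \<times> real \<Rightarrow> quat" where
  "Pf I \<phi> p = scaleR (1/2) (\<phi> (sl I p) + \<phi> (sl (-I) p))"
definition Qf :: "quat \<Rightarrow> (quat \<Rightarrow> quat) \<Rightarrow> real \<times> real \<Rightarrow> quat" where
  "Qf I \<phi> p = scaleR (-1/2) (I * (\<phi> (sl I p) - \<phi> (sl (-I) p)))"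

lemma US_sym:
  assumes "symmetric_set \<Omega>" "I \<in> unit_sphere" "J \<in> unit_sphere"
  shows "US \<Omega> J = US \<Omega> I"
  using assms unfolding symmetric_set_def US_def sl_def qreal_of_real by blast

lemma sphere_mult_twice: "I \<in> unit_sphere \<Longrightarrow> I * (I * x) = - x"
  by (simp add: mult.assoc[symmetric] unit_sphere_sq)

lemma PQ_deriv:
  assumes reg: "regular \<Omega> \<phi>" and I: "I \<in> unit_sphere" and sym: "symmetric_set \<Omega>"
    and p: "p \<in> US \<Omega> I"
  shows "\<exists>DP DQ. (Pf I \<phi> has_derivative DP) (at p) \<and> (Qf I \<phi> has_derivative DQ) (at p) \<and>
     DP (1,0) = DQ (0,1) \<and> DP (0,1) = - DQ (1,0)"
proof -
  have mI: "- I \<in> unit_sphere" using I by (rule unit_sphere_neg)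
  have p': "p \<in> US \<Omega> (-I)" using US_sym[OF sym I mI] p by simp
  obtain D1 where D1: "((\<lambda>p. \<phi> (sl I p)) has_derivative D1) (at p)" "D1 (1,0) + I * D1 (0,1) = 0"
    using reg I p unfolding regular_iff_scr scr_def by blast
  obtain D2 where D2: "((\<lambda>p. \<phi> (sl (-I) p)) has_derivative D2) (at p)" "D2 (1,0) + (-I) * D2 (0,1) = 0"
    using reg mI p' unfolding regular_iff_scr scr_def by blast
  have dP: "(Pf I \<phi> has_derivative (\<lambda>h. scaleR (1/2) (D1 h + D2 h))) (at p)"
    unfolding Pf_def[abs_def]
    by (rule bounded_linear.has_derivative[OF bounded_linear_scaleR_right has_derivative_add[OF D1(1) D2(1)]])
  have dQ: "(Qf I \<phi> has_derivative (\<lambda>h. scaleR (-1/2) (I * (D1 h - D2 h)))) (at p)"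
    unfolding Qf_def[abs_def]
    by (rule bounded_linear.has_derivative[OF bounded_linear_scaleR_right
          bounded_linear.has_derivative[OF bounded_linear_mult_right has_derivative_diff[OF D1(1) D2(1)]]])
  have e1: "D1 (1,0) = - (I * D1 (0,1))" using D1(2) by (simp add: eq_neg_iff_add_eq_0)
  have e2: "D2 (1,0) = I * D2 (0,1)" using D2(2) by (simp add: algebra_simps)
  have "scaleR (1/2) (D1 (1,0) + D2 (1,0)) = scaleR (-1/2) (I * (D1 (0,1) - D2 (0,1)))"
    unfolding e1 e2 by (simp add: algebra_simps)
  moreover have "scaleR (1/2) (D1 (0,1) + D2 (0,1)) = - scaleR (-1/2) (I * (D1 (1,0) - D2 (1,0)))"
    unfolding e1 e2 using sphere_mult_twice[OF I] by (simp add: algebra_simps)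
  ultimately show ?thesis using dP dQ by blast
qed

lemma slice_domain_US:
  assumes "slice_domain \<Omega>" "J \<in> unit_sphere"
  shows "open (US \<Omega> J)" "connected (US \<Omega> J)" "\<exists>x0. (x0, 0) \<in> US \<Omega> J"
proof -
  have e: "{p :: real \<times> real. qreal (fst p) + qreal (snd p) * J \<in> \<Omega>} = US \<Omega> J"
    by (simp add: US_def sl_def qreal_of_real)
  have "open {p :: real \<times> real. qreal (fst p) + qreal (snd p) * J \<in> \<Omega>}"
     "connected {p :: real \<times> real. qreal (fst p) + qreal (snd p) * J \<in> \<Omega>}"
    using assms unfolding slice_domain_def by auto
  then show "open (US \<Omega> J)" "connected (US \<Omega> J)" unfolding e by auto
  obtain x where "qreal x \<in> \<Omega>" using assms(1) unfolding slice_domain_def by blast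
  then have "(x, 0) \<in> US \<Omega> J" by (simp add: US_def sl_def qreal_of_real)
  then show "\<exists>x0. (x0, 0) \<in> US \<Omega> J" by blast
qed

lemma Pf_real: "Pf I \<phi> (x, 0) = \<phi> (of_real x)"
  by (simp add: Pf_def sl_def scaleR_2 [symmetric])

lemma Qf_real: "Qf I \<phi> (x, 0) = 0"
  by (simp add: Qf_def sl_def)

lemma rep_formula:
  assumes reg: "regular \<Omega> \<phi>" and I: "I \<in> unit_sphere" and J: "J \<in> unit_sphere"
    and sym: "symmetric_set \<Omega>" and sd: "slice_domain \<Omega>" and p: "p \<in> US \<Omega> I"
  shows "\<phi> (sl J p) = Pf I \<phi> p + J * Qf I \<phi> p"
proof -
  define h where "h p = \<phi> (sl J p) - Pf I \<phi> p - J * Qf I \<phi> p" for p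
  have UJ: "US \<Omega> J = US \<Omega> I" by (rule US_sym[OF sym I J])
  have "scr J (US \<Omega> I) h"
    unfolding scr_def
  proof
    fix p assume p: "p \<in> US \<Omega> I"
    obtain Dj where Dj: "((\<lambda>p. \<phi> (sl J p)) has_derivative Dj) (at p)" "Dj (1,0) + J * Dj (0,1) = 0"
      using reg J p UJ unfolding regular_iff_scr scr_def by blast
    obtain DP DQ where PQ: "(Pf I \<phi> has_derivative DP) (at p)" "(Qf I \<phi> has_derivative DQ) (at p)"
      "DP (1,0) = DQ (0,1)" "DP (0,1) = - DQ (1,0)"
      using PQ_deriv[OF reg I sym p] by blast
    have "(h has_derivative (\<lambda>x. Dj x - DP x - J * DQ x)) (at p)"
      unfolding h_def[abs_def]
      by (intro has_derivative_diff Dj(1) PQ(1) bounded_linear.has_derivative[OF bounded_linear_mult_right PQ(2)])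
    moreover have "(Dj (1,0) - DP (1,0) - J * DQ (1,0)) + J * (Dj (0,1) - DP (0,1) - J * DQ (0,1)) = 0"
    proof -
      have "(Dj (1,0) - DP (1,0) - J * DQ (1,0)) + J * (Dj (0,1) - DP (0,1) - J * DQ (0,1))
          = (Dj (1,0) + J * Dj (0,1)) - DP (1,0) - J * (DQ (1,0) + DP (0,1)) - J * (J * DQ (0,1))"
        by (simp add: algebra_simps)
      also have "\<dots> = 0" using Dj(2) PQ(3,4) sphere_mult_twice[OF J] by simp
      finally show ?thesis .
    qed
    ultimately show "\<exists>D. (h has_derivative D) (at p) \<and> D (1,0) + J * D (0,1) = 0" by blast
  qed
  moreover obtain x0 where "(x0, 0) \<in> US \<Omega> I" using slice_domain_US[OF sd I] by blast
  ultimately have "h p = 0"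
    using scr_identity[OF J slice_domain_US(1,2)[OF sd I]] p
    by (metis Pf_real Qf_real diff_self h_def mult_zero_right sl_real diff_zero)
  then show ?thesis by (simp add: h_def diff_eq_eq add.commute)
qed

lemma deriv_zero_of_const:
  assumes "open U" "p \<in> U" "(f has_derivative D) (at p)" "\<And>x. x \<in> U \<Longrightarrow> f x = c"
  shows "D = (\<lambda>_. 0)"
proof -
  have "((\<lambda>_. c) has_derivative D) (at p)"
    by (rule has_derivative_transform_within_open[OF assms(3,1,2)]) (use assms(4) in auto)
  then show ?thesis using has_derivative_unique[OF _ has_derivative_const] by blast
qed

lemma const_of_zero_deriv:
  fixes f :: "real \<times> real \<Rightarrow> quat"
  assumes "open U" "connected U" "\<And>p. p \<in> U \<Longrightarrow> (f has_derivative (\<lambda>_. 0)) (at p)"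
    "p \<in> U" "p0 \<in> U"
  shows "f p = f p0"
proof -
  have c: "continuous_on U f"
  proof (rule continuous_at_imp_continuous_on, rule ballI)
    fix x assume x: "x \<in> U" show "isCont f x" by (rule has_derivative_continuous[OF assms(3)[OF x]])
  qed
  have d: "\<forall>x\<in>U - {}. (f has_derivative (\<lambda>h. 0)) (at x within U)"
  proof
    fix x assume "x \<in> U - {}"
    then have x: "x \<in> U" by simp
    show "(f has_derivative (\<lambda>h. 0)) (at x within U)"
      by (rule has_derivative_at_withinI[OF assms(3)[OF x]])
  qed
  have "f constant_on U"
    by (rule has_derivative_zero_connected_constant_on[OF assms(2,1) finite.emptyI c d])
  then show ?thesis using assms(4,5) unfolding constant_on_def by metis
qed

lemma lin_zero_of_basis:
  fixes D :: "real \<times> real \<Rightarrow> 'a::real_normed_vector"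
  assumes "bounded_linear D" "D (1,0) = 0" "D (0,1) = 0"
  shows "D = (\<lambda>_. 0)"
proof
  fix x :: "real \<times> real"
  show "D x = 0" using bl_pair_decomp[OF assms(1), of "fst x" "snd x"] assms(2,3) by simp
qed


lemma quat_half:
  assumes "(a::quat) + y = c" "a - y = c" shows "y = 0"
proof -
  have "y + y = (a + y) - (a - y)" by (simp add: algebra_simps)
  also have "\<dots> = 0" using assms by simp
  finally have "scaleR 2 y = 0" by (simp add: scaleR_2)
  then show ?thesis by simp
qed

lemma lemmaR:
  assumes reg: "\<And>m. m < 4 \<Longrightarrow> regular \<Omega> (\<psi> m)" and I: "I \<in> unit_sphere"
    and sym: "symmetric_set \<Omega>" and sd: "slice_domain \<Omega>"
    and sum: "\<And>q. q \<in> \<Omega> \<Longrightarrow> (\<Sum>m<4. ebase m * \<psi> m q) = c"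
    and q: "q \<in> \<Omega>" "q' \<in> \<Omega>" and m: "m < 4"
  shows "\<psi> m q = \<psi> m q'"
proof -
  define U where "U = US \<Omega> I"
  have oU: "open U" and cU: "connected U" using slice_domain_US[OF sd I] by (auto simp: U_def)
  obtain x0 where x0: "(x0, 0) \<in> U" using slice_domain_US[OF sd I] by (auto simp: U_def)
  define P where "P m = Pf I (\<psi> m)" for m
  define Q where "Q m = Qf I (\<psi> m)" for m
  have E: "(\<Sum>m<4. ebase m * P m p) + (\<Sum>m<4. ebase m * (J * Q m p)) = c"
    if J: "J \<in> unit_sphere" and p: "p \<in> U" for J p
  proof -
    have "p \<in> US \<Omega> J" using p US_sym[OF sym I J] by (simp add: U_def)
    then have "sl J p \<in> \<Omega>" by (simp add: US_def)
    from sum[OF this] have "(\<Sum>m<4. ebase m * (P m p + J * Q m p)) = c"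
      using rep_formula[OF reg I J sym sd] p by (simp add: U_def P_def Q_def)
    then show ?thesis by (simp add: distrib_left sum.distrib)
  qed
  have A: "(\<Sum>m<4. ebase m * (J * Q m p)) = 0" if J: "J \<in> unit_sphere" and p: "p \<in> U" for J p
  proof -
    have 1: "(\<Sum>m<4. ebase m * P m p) + (\<Sum>m<4. ebase m * (J * Q m p)) = c" by (rule E[OF J p])
    have 2: "(\<Sum>m<4. ebase m * P m p) - (\<Sum>m<4. ebase m * (J * Q m p)) = c"
      using E[OF unit_sphere_neg[OF J] p] by (simp add: sum_negf)
    show ?thesis by (rule quat_half[OF 1 2])
  qed
  have A0: "(\<Sum>m<4. ebase m * P m p) = c" if p: "p \<in> U" for p
    using E[OF I p] A[OF I p] by simp
  have derivs: "\<exists>DPQ. \<forall>m\<in>{..<4}. (P m has_derivative fst (DPQ m)) (at p) \<and> (Q m has_derivative snd (DPQ m)) (at p) \<and>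
        fst (DPQ m) (1,0) = snd (DPQ m) (0,1) \<and> fst (DPQ m) (0,1) = - snd (DPQ m) (1,0)"
    if p: "p \<in> U" for p
  proof -
    have "\<forall>m\<in>{..<4}. \<exists>DPQ. (P m has_derivative fst DPQ) (at p) \<and> (Q m has_derivative snd DPQ) (at p) \<and>
        fst DPQ (1,0) = snd DPQ (0,1) \<and> fst DPQ (0,1) = - snd DPQ (1,0)"
    proof
      fix m :: nat assume "m \<in> {..<4}"
      then obtain DP DQ where "(P m has_derivative DP) (at p)" "(Q m has_derivative DQ) (at p)"
        "DP (1,0) = DQ (0,1)" "DP (0,1) = - DQ (1,0)"
        using PQ_deriv[OF reg I sym, of m p] p by (auto simp: U_def P_def Q_def)
      then show "\<exists>DPQ. (P m has_derivative fst DPQ) (at p) \<and> (Q m has_derivative snd DPQ) (at p) \<and>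
        fst DPQ (1,0) = snd DPQ (0,1) \<and> fst DPQ (0,1) = - snd DPQ (1,0)"
        by (intro exI[of _ "(DP, DQ)"]) simp
    qed
    then show ?thesis by (rule bchoice)
  qed
  have W0: "(\<Sum>m<4. ebase m * Q m p) = 0" if p: "p \<in> U" for p
  proof -
    have "(\<lambda>p. \<Sum>m<4. ebase m * Q m p) p = (\<lambda>p. \<Sum>m<4. ebase m * Q m p) (x0, 0)"
    proof (rule const_of_zero_deriv[OF oU cU _ p x0])
      fix p assume p: "p \<in> U"
      obtain DPQ where D: "\<forall>m\<in>{..<4}. (P m has_derivative fst (DPQ m)) (at p) \<and> (Q m has_derivative snd (DPQ m)) (at p) \<and>
        fst (DPQ m) (1,0) = snd (DPQ m) (0,1) \<and> fst (DPQ m) (0,1) = - snd (DPQ m) (1,0)"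
        using derivs[OF p] by blast
      have dSP: "((\<lambda>p. \<Sum>m<4. ebase m * P m p) has_derivative (\<lambda>h. \<Sum>m<4. ebase m * fst (DPQ m) h)) (at p)"
        using D by (intro has_derivative_sum bounded_linear.has_derivative[OF bounded_linear_mult_right]) auto
      have SP0: "(\<lambda>h. \<Sum>m<4. ebase m * fst (DPQ m) h) = (\<lambda>_. 0)"
        by (rule deriv_zero_of_const[OF oU p dSP A0])
      have dW: "((\<lambda>p. \<Sum>m<4. ebase m * Q m p) has_derivative (\<lambda>h. \<Sum>m<4. ebase m * snd (DPQ m) h)) (at p)"
        using D by (intro has_derivative_sum bounded_linear.has_derivative[OF bounded_linear_mult_right]) auto
      have "(\<lambda>h. \<Sum>m<4. ebase m * snd (DPQ m) h) = (\<lambda>_. 0)"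
      proof (rule lin_zero_of_basis)
        show "bounded_linear (\<lambda>h. \<Sum>m<4. ebase m * snd (DPQ m) h)"
          using dW by (rule has_derivative_bounded_linear)
        have "(\<Sum>m<4. ebase m * snd (DPQ m) (1,0)) = - (\<Sum>m<4. ebase m * fst (DPQ m) (0,1))"
          using D by (simp add: sum_negf[symmetric])
        also have "\<dots> = 0" using fun_cong[OF SP0, of "(0,1)"] by simp
        finally show "(\<Sum>m<4. ebase m * snd (DPQ m) (1,0)) = 0" .
        have "(\<Sum>m<4. ebase m * snd (DPQ m) (0,1)) = (\<Sum>m<4. ebase m * fst (DPQ m) (1,0))"
          using D by simp
        also have "\<dots> = 0" using fun_cong[OF SP0, of "(1,0)"] by simp
        finally show "(\<Sum>m<4. ebase m * snd (DPQ m) (0,1)) = 0" .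
      qed
      then show "((\<lambda>p. \<Sum>m<4. ebase m * Q m p) has_derivative (\<lambda>_. 0)) (at p)" using dW by simp
    qed
    also have "\<dots> = 0" by (simp add: Q_def Qf_real)
    finally show ?thesis by simp
  qed
  have Q0: "Q m p = 0" if p: "p \<in> U" and m: "m < 4" for p m
  proof -
    have "\<forall>m<4. Q m p = 0"
    proof (rule quat_tensor_zero)
      fix a assume "a \<in> {1, qi, qj, qk}"
      then show "(\<Sum>m<4. ebase m * (a * Q m p)) = 0"
        by (elim insertE emptyE) (use W0[OF p] A[OF qijk_sphere(1) p] A[OF qijk_sphere(2) p] A[OF qijk_sphere(3) p] in simp_all)
    qed
    then show ?thesis using m by blast
  qed
  have Pc: "P m p = P m p0" if p: "p \<in> U" and p0: "p0 \<in> U" for p p0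
  proof (rule const_of_zero_deriv[OF oU cU _ p p0])
    fix p assume p: "p \<in> U"
    obtain DPQ where D: "\<forall>m\<in>{..<4}. (P m has_derivative fst (DPQ m)) (at p) \<and> (Q m has_derivative snd (DPQ m)) (at p) \<and>
        fst (DPQ m) (1,0) = snd (DPQ m) (0,1) \<and> fst (DPQ m) (0,1) = - snd (DPQ m) (1,0)"
      using derivs[OF p] by blast
    have mm: "m \<in> {..<4}" using m by simp
    have "(Q m has_derivative snd (DPQ m)) (at p)" using D mm by blast
    then have DQ0: "snd (DPQ m) = (\<lambda>_. 0)"
      by (rule deriv_zero_of_const[OF oU p _ Q0[OF _ m]])
    have "fst (DPQ m) = (\<lambda>_. 0)"
      by (rule lin_zero_of_basis) (use D mm DQ0 has_derivative_bounded_linear in auto)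
    then show "(P m has_derivative (\<lambda>_. 0)) (at p)" using D mm by metis
  qed
  obtain J p where J: "J \<in> unit_sphere" and qp: "q = sl J p" using slice_rep[OF I, of q] by blast
  obtain J' p' where J': "J' \<in> unit_sphere" and qp': "q' = sl J' p'" using slice_rep[OF I, of q'] by blast
  have "p \<in> US \<Omega> J" using q qp by (simp add: US_def)
  then have pU: "p \<in> U" using US_sym[OF sym I J] by (simp add: U_def)
  have "p' \<in> US \<Omega> J'" using q qp' by (simp add: US_def)
  then have pU': "p' \<in> U" using US_sym[OF sym I J'] by (simp add: U_def)
  have "\<psi> m q = P m p" using rep_formula[OF reg[OF m] I J sym sd] pU Q0[OF pU m] qp
    by (simp add: U_def P_def Q_def)
  also have "\<dots> = P m p'" by (rule Pc[OF pU pU'])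
  also have "\<dots> = \<psi> m q'" using rep_formula[OF reg[OF m] I J' sym sd] pU' Q0[OF pU' m] qp'
    by (simp add: U_def P_def Q_def)
  finally show ?thesis .
qed


definition vinner :: "nat \<Rightarrow> (nat \<Rightarrow> quat) \<Rightarrow> (nat \<Rightarrow> quat) \<Rightarrow> real" where
  "vinner n x y = (\<Sum>i<n. inner (x i) (y i))"

lemma vec_norm_L2: "vec_norm n x = L2_set (\<lambda>i. norm (x i)) {..<n}"
  by (simp add: vec_norm_def L2_set_def)

lemma vec_norm_nonneg: "vec_norm n x \<ge> 0"
  by (simp add: vec_norm_def sum_nonneg)

lemma vec_norm_sq: "(vec_norm n x)\<^sup>2 = (\<Sum>i<n. (norm (x i))\<^sup>2)"
  by (simp add: vec_norm_def sum_nonneg)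

lemma vinner_self: "vinner n x x = (vec_norm n x)\<^sup>2"
  by (simp add: vinner_def vec_norm_sq power2_norm_eq_inner)

lemma vinner_commute: "vinner n x y = vinner n y x"
  by (simp add: vinner_def inner_commute)

lemma vinner_CS: "vinner n x y \<le> vec_norm n x * vec_norm n y"
proof -
  have "vinner n x y \<le> (\<Sum>i<n. \<bar>norm (x i)\<bar> * \<bar>norm (y i)\<bar>)"
    unfolding vinner_def
    by (rule sum_mono) (use Cauchy_Schwarz_ineq2 norm_cauchy_schwarz in auto)
  also have "\<dots> \<le> vec_norm n x * vec_norm n y"
    unfolding vec_norm_L2 by (rule L2_set_mult_ineq)
  finally show ?thesis .
qed

lemma norm_le_vec_norm: "i < n \<Longrightarrow> norm (x i) \<le> vec_norm n x"
  unfolding vec_norm_L2 by (rule member_le_L2_set) auto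

lemma vec_norm_le_sum: "vec_norm n x \<le> (\<Sum>i<n. norm (x i))"
  unfolding vec_norm_L2 by (rule L2_set_le_sum) simp

lemma vec_norm_scaleR: "vec_norm n (\<lambda>i. scaleR r (x i)) = \<bar>r\<bar> * vec_norm n x"
proof -
  have "vec_norm n (\<lambda>i. scaleR r (x i)) = sqrt (r\<^sup>2 * (\<Sum>i<n. (norm (x i))\<^sup>2))"
    by (simp add: vec_norm_def sum_distrib_left power_mult_distrib)
  also have "\<dots> = \<bar>r\<bar> * vec_norm n x" by (simp add: real_sqrt_mult vec_norm_def)
  finally show ?thesis .
qed

lemma vec_norm_eq_0: "vec_norm n x = 0 \<longleftrightarrow> (\<forall>i<n. x i = 0)"
  by (auto simp: vec_norm_def sum_nonneg_eq_0_iff)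

lemma mat_vec_scaleR: "mat_vec n A (\<lambda>i. scaleR r (x i)) = (\<lambda>i. scaleR r (mat_vec n A x i))"
  by (simp add: mat_vec_def scaleR_sum_right)

lemma mat_vec_bound:
  "vec_norm n (mat_vec n A x) \<le> (\<Sum>i<n. \<Sum>k<n. norm (A i k)) * vec_norm n x"
proof -
  have "vec_norm n (mat_vec n A x) \<le> (\<Sum>i<n. norm (mat_vec n A x i))" by (rule vec_norm_le_sum)
  also have "\<dots> \<le> (\<Sum>i<n. \<Sum>k<n. norm (A i k) * vec_norm n x)"
  proof (rule sum_mono)
    fix i assume "i \<in> {..<n}"
    have "norm (mat_vec n A x i) \<le> (\<Sum>k<n. norm (A i k * x k))"
      unfolding mat_vec_def by (rule norm_sum)
    also have "\<dots> \<le> (\<Sum>k<n. norm (A i k) * vec_norm n x)"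
      by (rule sum_mono) (simp add: norm_mult mult_left_mono norm_le_vec_norm)
    finally show "norm (mat_vec n A x i) \<le> (\<Sum>k<n. norm (A i k) * vec_norm n x)" .
  qed
  also have "\<dots> = (\<Sum>i<n. \<Sum>k<n. norm (A i k)) * vec_norm n x"
    by (simp add: sum_distrib_right)
  finally show ?thesis .
qed

lemma op_norm_bdd: "bdd_above ((\<lambda>x. vec_norm n (mat_vec n A x)) ` {x. vec_norm n x \<le> 1})"
proof (rule bdd_aboveI)
  fix y assume "y \<in> (\<lambda>x. vec_norm n (mat_vec n A x)) ` {x. vec_norm n x \<le> 1}"
  then obtain x where x: "vec_norm n x \<le> 1" "y = vec_norm n (mat_vec n A x)" by auto
  have S: "0 \<le> (\<Sum>i<n. \<Sum>k<n. norm (A i k))" by (simp add: sum_nonneg)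
  have "y \<le> (\<Sum>i<n. \<Sum>k<n. norm (A i k)) * vec_norm n x" using x mat_vec_bound by simp
  also have "\<dots> \<le> (\<Sum>i<n. \<Sum>k<n. norm (A i k)) * 1" by (rule mult_left_mono[OF x(1) S])
  finally show "y \<le> (\<Sum>i<n. \<Sum>k<n. norm (A i k))" by simp
qed

lemma op_norm_upper: "vec_norm n x \<le> 1 \<Longrightarrow> vec_norm n (mat_vec n A x) \<le> op_norm n A"
  unfolding op_norm_def by (rule cSUP_upper[OF _ op_norm_bdd]) simp

lemma op_norm_nonneg: "op_norm n A \<ge> 0"
proof -
  have "vec_norm n (\<lambda>_. 0) \<le> 1" by (simp add: vec_norm_def)
  then have "vec_norm n (mat_vec n A (\<lambda>_. 0)) \<le> op_norm n A" by (rule op_norm_upper)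
  then show ?thesis using vec_norm_nonneg[of n "mat_vec n A (\<lambda>_. 0)"] by linarith
qed

lemma op_norm_bound: "vec_norm n (mat_vec n A x) \<le> op_norm n A * vec_norm n x"
proof (cases "vec_norm n x = 0")
  case True
  then have "\<forall>i<n. x i = 0" by (simp add: vec_norm_eq_0)
  then have "mat_vec n A x = (\<lambda>i. 0)" by (simp add: mat_vec_def)
  then show ?thesis using True by (simp add: vec_norm_def)
next
  case False
  define r where "r = 1 / vec_norm n x"
  have r: "r > 0" using False vec_norm_nonneg[of n x] by (simp add: r_def)
  have "vec_norm n (\<lambda>i. scaleR r (x i)) = 1" using False r by (simp add: vec_norm_scaleR r_def)
  then have "vec_norm n (mat_vec n A (\<lambda>i. scaleR r (x i))) \<le> op_norm n A" by (intro op_norm_upper) simp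
  then have "r * vec_norm n (mat_vec n A x) \<le> op_norm n A"
    using r by (simp add: mat_vec_scaleR vec_norm_scaleR)
  then show ?thesis using False vec_norm_nonneg[of n x] by (simp add: r_def field_simps)
qed

lemma op_norm_zero_imp:
  assumes "op_norm n A \<le> 0" "i < n" "j < n" shows "A i j = 0"
proof -
  define e where "e = (\<lambda>k. if k = j then (1::quat) else 0)"
  have "(\<lambda>i. (norm (e i))\<^sup>2) = (\<lambda>i. if i = j then 1 else 0)" by (auto simp: e_def)
  then have "vec_norm n e = 1" using assms(3) unfolding vec_norm_def by (simp only:) simp
  then have "vec_norm n (mat_vec n A e) \<le> 0" using op_norm_upper[of n e A] assms(1) by simp
  then have "vec_norm n (mat_vec n A e) = 0" using vec_norm_nonneg by (metis antisym)
  then have "mat_vec n A e i = 0" using assms(2) by (simp add: vec_norm_eq_0)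
  then show ?thesis using assms(3) by (simp add: mat_vec_def e_def if_distrib sum.delta cong: if_cong)
qed

lemma cont_coord[continuous_intros]: "continuous_on S (\<lambda>x::nat \<Rightarrow> quat. x i)"
  by (rule continuous_on_subset[OF continuous_on_product_coordinates]) simp

lemma cont_vec_norm: "continuous_on S (\<lambda>x. vec_norm n x)"
  unfolding vec_norm_def by (intro continuous_intros)

lemma cont_mat_vec_norm: "continuous_on S (\<lambda>x. vec_norm n (mat_vec n A x))"
  unfolding vec_norm_def mat_vec_def by (intro continuous_intros)

lemma vec_trunc:
  "vec_norm n (\<lambda>i. if i < n then x i else 0) = vec_norm n x"
  "mat_vec n A (\<lambda>i. if i < n then x i else 0) = mat_vec n A x"
  by (simp_all add: vec_norm_def mat_vec_def)

lemma op_norm_attained: "\<exists>v. vec_norm n v \<le> 1 \<and> vec_norm n (mat_vec n A v) = op_norm n A"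
proof -
  define S where "S i = (if i < n then cball (0::quat) 1 else {0})" for i
  define K where "K = PiE UNIV S \<inter> {x. vec_norm n x \<le> 1}"
  have "compactin (product_topology (\<lambda>i. euclidean) UNIV) (PiE UNIV S)"
    unfolding compactin_PiE by (auto simp: S_def)
  then have c0: "compact (PiE UNIV S)"
    by (simp add: euclidean_product_topology)
  have cl: "closed {x. vec_norm n x \<le> 1}"
    by (intro closed_Collect_le cont_vec_norm continuous_on_const)
  have cK: "compact K" unfolding K_def by (rule compact_Int_closed[OF c0 cl])
  have z: "(\<lambda>_. 0) \<in> K" by (simp add: K_def S_def vec_norm_def PiE_def extensional_def)
  obtain v where v: "v \<in> K" "\<And>x. x \<in> K \<Longrightarrow> vec_norm n (mat_vec n A x) \<le> vec_norm n (mat_vec n A v)"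
    using continuous_attains_sup[OF cK _ cont_mat_vec_norm, of n A] z by blast
  have vn: "vec_norm n v \<le> 1" using v(1) by (simp add: K_def)
  have "op_norm n A \<le> vec_norm n (mat_vec n A v)"
    unfolding op_norm_def
  proof (rule cSUP_least)
    show "{x. vec_norm n x \<le> 1} \<noteq> {}" using z by (auto simp: K_def)
    fix x assume x: "x \<in> {x. vec_norm n x \<le> 1}"
    define x' where "x' = (\<lambda>i. if i < n then x i else 0)"
    have "x' \<in> K"
      using x norm_le_vec_norm[of _ n x] by (fastforce simp: K_def x'_def S_def vec_trunc PiE_def extensional_def intro: order_trans)
    then have "vec_norm n (mat_vec n A x') \<le> vec_norm n (mat_vec n A v)" by (rule v(2))
    then show "vec_norm n (mat_vec n A x) \<le> vec_norm n (mat_vec n A v)" by (simp add: x'_def vec_trunc)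
  qed
  moreover have "vec_norm n (mat_vec n A v) \<le> op_norm n A" by (rule op_norm_upper[OF vn])
  ultimately show ?thesis using vn by (intro exI[of _ v]) simp
qed


lemma Re_mult_cnj_inner: "quat.Re (a * cnj b) = inner a b"
  by (simp add: inner_quat_def)

lemma vec_norm_diff_sq:
  "(vec_norm n (\<lambda>k. a k - b k))\<^sup>2 = (vec_norm n a)\<^sup>2 - 2 * vinner n a b + (vec_norm n b)\<^sup>2"
proof -
  have "(vec_norm n (\<lambda>k. a k - b k))\<^sup>2 = (\<Sum>k<n. (norm (a k))\<^sup>2 - 2 * inner (a k) (b k) + (norm (b k))\<^sup>2)"
    unfolding vec_norm_sq
    by (rule sum.cong) (simp_all add: power2_norm_eq_inner inner_diff_left inner_diff_right inner_commute)
  also have "\<dots> = (vec_norm n a)\<^sup>2 - 2 * vinner n a b + (vec_norm n b)\<^sup>2"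
    by (simp add: vec_norm_sq vinner_def sum.distrib sum_subtractf sum_distrib_left)
  finally show ?thesis .
qed

lemma slice_mem:
  assumes "q0 \<in> slice \<Omega> I" obtains p where "q0 = sl I p" "p \<in> US \<Omega> I"
  using assms by (auto simp: slice_def US_def sl_def qreal_of_real)

lemma max_step:
  assumes sd: "slice_domain \<Omega>" and I: "I \<in> unit_sphere" and q0: "q0 \<in> slice \<Omega> I"
    and reg: "\<And>k. k < n \<Longrightarrow> regular \<Omega> (g k)"
    and bound: "\<And>q. q \<in> \<Omega> \<Longrightarrow> vec_norm n (\<lambda>k. g k q) \<le> vec_norm n (\<lambda>k. g k q0)"
    and q: "q \<in> \<Omega>" and k: "k < n"
  shows "g k q = g k q0"
proof -
  define c where "c k = g k q0" for k
  define s where "s = vec_norm n c"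
  have cc: "(\<lambda>k. g k q0) = c" by (rule ext) (simp add: c_def)
  have s0: "s \<ge> 0" by (simp add: s_def vec_norm_nonneg)
  define \<psi> where "\<psi> q = (\<Sum>k<n. g k q * cnj (c k))" for q
  have regpsi: "regular \<Omega> \<psi>"
    unfolding \<psi>_def[abs_def] by (intro regular_sum regular_mult_right reg) simp
  have Repsi: "quat.Re (\<psi> q) = vinner n (\<lambda>k. g k q) c" for q
    by (simp only: \<psi>_def Re_sum Re_mult_cnj_inner vinner_def)
  have le: "quat.Re (\<psi> q) \<le> s * s" if "q \<in> \<Omega>" for q
  proof -
    have "quat.Re (\<psi> q) \<le> vec_norm n (\<lambda>k. g k q) * s" unfolding Repsi s_def by (rule vinner_CS)
    also have "\<dots> \<le> s * s" using bound[OF that] s0 unfolding cc s_def[symmetric] by (rule mult_right_mono)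
    finally show ?thesis .
  qed
  have eq0: "quat.Re (\<psi> q0) = s * s"
    unfolding Repsi by (simp add: c_def[symmetric] vinner_self s_def power2_eq_square)
  obtain p0 where p0: "q0 = sl I p0" "p0 \<in> US \<Omega> I" using slice_mem[OF q0] by blast
  have oU: "open (US \<Omega> I)" and cU: "connected (US \<Omega> I)" using slice_domain_US[OF sd I] by auto
  have scrI: "scr I (US \<Omega> I) (\<lambda>p. \<psi> (sl I p))" using regpsi I by (simp add: regular_iff_scr)
  have onI: "g k (sl I p) = c k" if p: "p \<in> US \<Omega> I" and k: "k < n" for p k
  proof -
    have "quat.Re (\<psi> (sl I p)) = quat.Re (\<psi> (sl I p0))"
    proof (rule scr_max[OF I oU cU scrI p0(2) _ p])
      fix p' assume "p' \<in> US \<Omega> I"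
      then have "sl I p' \<in> \<Omega>" by (simp add: US_def)
      then show "quat.Re (\<psi> (sl I p')) \<le> quat.Re (\<psi> (sl I p0))" using le eq0 p0(1) by simp
    qed
    then have e: "vinner n (\<lambda>k. g k (sl I p)) c = s * s" using eq0 p0(1) by (simp add: Repsi)
    have "sl I p \<in> \<Omega>" using p by (simp add: US_def)
    then have b: "(vec_norm n (\<lambda>k. g k (sl I p)))\<^sup>2 \<le> s * s"
      using bound[of "sl I p"] vec_norm_nonneg[of n "\<lambda>k. g k (sl I p)"] s0
      unfolding cc s_def[symmetric] power2_eq_square by (simp add: mult_mono)
    have "(vec_norm n (\<lambda>k. g k (sl I p) - c k))\<^sup>2 \<le> 0"
      unfolding vec_norm_diff_sq e using b by (simp add: s_def power2_eq_square)
    then have "vec_norm n (\<lambda>k. g k (sl I p) - c k) = 0" by simp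
    then show ?thesis using k by (simp add: vec_norm_eq_0)
  qed
  obtain J p where J: "J \<in> unit_sphere" and qp: "q = sl J p" using slice_rep[OF I, of q] by blast
  have pJ: "p \<in> US \<Omega> J" using q qp by (simp add: US_def)
  have scrJ: "scr J (US \<Omega> J) (\<lambda>p. g k (sl J p) - c k)"
    using reg[OF k] J by (intro scr_diff scr_const) (simp add: regular_iff_scr)
  obtain x0 where x0: "(x0, 0) \<in> US \<Omega> J" using slice_domain_US[OF sd J] by blast
  have "g k (sl J p) - c k = 0"
  proof (rule scr_identity[OF J slice_domain_US(1,2)[OF sd J] scrJ x0 _ pJ])
    fix x assume "(x, 0) \<in> US \<Omega> J"
    then have "(x, 0) \<in> US \<Omega> I" by (simp add: US_def sl_real)
    from onI[OF this k] show "g k (sl J (x, 0)) - c k = 0" by (simp add: sl_real)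
  qed
  then show ?thesis using qp by (simp add: c_def)
qed


lemma mat_mult_assoc: "mat_mult n (mat_mult n A B) C = mat_mult n A (mat_mult n B C)"
proof (intro ext)
  fix i j
  have "mat_mult n (mat_mult n A B) C i j = (\<Sum>k<n. \<Sum>l<n. A i l * B l k * C k j)"
    by (simp add: mat_mult_def sum_distrib_right)
  also have "\<dots> = (\<Sum>l<n. \<Sum>k<n. A i l * (B l k * C k j))"
    by (subst sum.swap) (simp add: mult.assoc)
  also have "\<dots> = mat_mult n A (mat_mult n B C) i j"
    by (simp add: mat_mult_def sum_distrib_left)
  finally show "mat_mult n (mat_mult n A B) C i j = mat_mult n A (mat_mult n B C) i j" .
qed

lemma mat_vec_mult: "mat_vec n (mat_mult n A B) x = mat_vec n A (mat_vec n B x)"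
proof
  fix i
  have "mat_vec n (mat_mult n A B) x i = (\<Sum>k<n. \<Sum>l<n. A i l * B l k * x k)"
    by (simp add: mat_vec_def mat_mult_def sum_distrib_right)
  also have "\<dots> = (\<Sum>l<n. \<Sum>k<n. A i l * (B l k * x k))"
    by (subst sum.swap) (simp add: mult.assoc)
  also have "\<dots> = mat_vec n A (mat_vec n B x) i"
    by (simp add: mat_vec_def sum_distrib_left)
  finally show "mat_vec n (mat_mult n A B) x i = mat_vec n A (mat_vec n B x) i" .
qed

lemma mat_adj_mult: "mat_adj (mat_mult n A B) = mat_mult n (mat_adj B) (mat_adj A)"
  by (intro ext) (simp add: mat_adj_def mat_mult_def cnj_sum cnj_mult)

lemma mat_adj_adj[simp]: "mat_adj (mat_adj A) = A"
  by (simp add: mat_adj_def)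

lemma sum_delta_l: "i < (n::nat) \<Longrightarrow> (\<Sum>k<n. (if i = k then 1 else 0) * (f k::quat)) = f i"
proof -
  assume i: "i < n"
  have "(\<Sum>k<n. (if i = k then 1 else 0) * f k) = (\<Sum>k<n. if i = k then f i else 0)"
    by (rule sum.cong) auto
  also have "\<dots> = f i" using i by simp
  finally show ?thesis .
qed

lemma sum_delta_r: "j < (n::nat) \<Longrightarrow> (\<Sum>k<n. (f k::quat) * (if k = j then 1 else 0)) = f j"
proof -
  assume j: "j < n"
  have "(\<Sum>k<n. f k * (if k = j then 1 else 0)) = (\<Sum>k<n. if k = j then f j else 0)"
    by (rule sum.cong) auto
  also have "\<dots> = f j" using j by simp
  finally show ?thesis .
qed

lemma mat_mult_id_right: "j < n \<Longrightarrow> mat_mult n A mat_id i j = A i j"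
  by (simp add: mat_mult_def mat_id_def sum_delta_r)

lemma mat_mult_id_left: "i < n \<Longrightarrow> mat_mult n mat_id A i j = A i j"
  by (simp add: mat_mult_def mat_id_def sum_delta_l)

lemma mat_mult_cong_left: "mat_eq n A A' \<Longrightarrow> i < n \<Longrightarrow> mat_mult n A B i j = mat_mult n A' B i j"
  by (simp add: mat_mult_def mat_eq_def)

lemma mat_mult_cong_right: "mat_eq n B B' \<Longrightarrow> j < n \<Longrightarrow> mat_mult n A B i j = mat_mult n A B' i j"
  by (simp add: mat_mult_def mat_eq_def)

lemma mat_eq_mult:
  assumes "mat_eq n A A'" "mat_eq n B B'" shows "mat_eq n (mat_mult n A B) (mat_mult n A' B')"
  using assms unfolding mat_eq_def mat_mult_def by simp

lemma unitary_mult: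
  assumes "unitary n U" "unitary n W" shows "unitary n (mat_mult n U W)"
proof -
  have 1: "mat_eq n (mat_mult n (mat_adj (mat_mult n U W)) (mat_mult n U W)) mat_id"
  proof -
    have "mat_mult n (mat_adj (mat_mult n U W)) (mat_mult n U W)
        = mat_mult n (mat_adj W) (mat_mult n (mat_mult n (mat_adj U) U) W)"
      by (simp add: mat_adj_mult mat_mult_assoc)
    moreover have "mat_eq n (mat_mult n (mat_adj W) (mat_mult n (mat_mult n (mat_adj U) U) W))
                   (mat_mult n (mat_adj W) (mat_mult n mat_id W))"
      using assms(1) unfolding unitary_def
      by (intro mat_eq_mult) (auto simp: mat_eq_def)
    moreover have "mat_eq n (mat_mult n (mat_adj W) (mat_mult n mat_id W)) mat_id"
    proof -
      have "mat_eq n (mat_mult n mat_id W) W" by (simp add: mat_eq_def mat_mult_id_left)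
      then have "mat_eq n (mat_mult n (mat_adj W) (mat_mult n mat_id W)) (mat_mult n (mat_adj W) W)"
        by (intro mat_eq_mult) (auto simp: mat_eq_def)
      then show ?thesis using assms(2) unfolding unitary_def mat_eq_def by simp
    qed
    ultimately show ?thesis unfolding mat_eq_def by simp
  qed
  have 2: "mat_eq n (mat_mult n (mat_mult n U W) (mat_adj (mat_mult n U W))) mat_id"
  proof -
    have "mat_mult n (mat_mult n U W) (mat_adj (mat_mult n U W))
        = mat_mult n U (mat_mult n (mat_mult n W (mat_adj W)) (mat_adj U))"
      by (simp add: mat_adj_mult mat_mult_assoc)
    moreover have "mat_eq n (mat_mult n U (mat_mult n (mat_mult n W (mat_adj W)) (mat_adj U)))
                   (mat_mult n U (mat_mult n mat_id (mat_adj U)))"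
      using assms(2) unfolding unitary_def
      by (intro mat_eq_mult) (auto simp: mat_eq_def)
    moreover have "mat_eq n (mat_mult n U (mat_mult n mat_id (mat_adj U))) mat_id"
    proof -
      have "mat_eq n (mat_mult n mat_id (mat_adj U)) (mat_adj U)" by (simp add: mat_eq_def mat_mult_id_left)
      then have "mat_eq n (mat_mult n U (mat_mult n mat_id (mat_adj U))) (mat_mult n U (mat_adj U))"
        by (intro mat_eq_mult) (auto simp: mat_eq_def)
      then show ?thesis using assms(1) unfolding unitary_def mat_eq_def by simp
    qed
    ultimately show ?thesis unfolding mat_eq_def by simp
  qed
  show ?thesis using 1 2 by (simp add: unitary_def)
qed


definition hh :: "nat \<Rightarrow> (nat \<Rightarrow> quat) \<Rightarrow> nat \<Rightarrow> nat \<Rightarrow> quat" where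
  "hh n w = (\<lambda>i j. mat_id i j - scaleR (2 / (vec_norm n w)\<^sup>2) (w i * cnj (w j)))"

lemma mat_id_cnj: "cnj (mat_id j i) = mat_id i j"
  by (simp add: mat_id_def)

lemma hh_adj: "mat_adj (hh n w) = hh n w"
  by (intro ext) (simp add: mat_adj_def hh_def mat_id_cnj cnj_mult)

lemma of_real_sum_quat: "of_real (\<Sum>k\<in>A. f k) = (\<Sum>k\<in>A. (of_real (f k) :: quat))"
  by (rule of_real_sum)

lemma sum_cnj_self: "(\<Sum>k<n. cnj (w k) * w k) = of_real ((vec_norm n w)\<^sup>2)"
  by (simp add: cnj_mult_self_real vec_norm_sq of_real_sum)

lemma scaleR_quat_assoc: "scaleR c (x::quat) * scaleR d y = scaleR (c * d) (x * y)"
  by simp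

lemma hh_sq:
  assumes "i < n" "j < n"
  shows "mat_mult n (hh n w) (hh n w) i j = mat_id i j"
proof -
  define c where "c = 2 / (vec_norm n w)\<^sup>2"
  define a where "a i j = scaleR c (w i * cnj (w j))" for i j
  have H: "hh n w = (\<lambda>i j. mat_id i j - a i j)" by (simp add: hh_def a_def c_def)
  have "mat_mult n (hh n w) (hh n w) i j =
      (\<Sum>k<n. mat_id i k * mat_id k j) - (\<Sum>k<n. mat_id i k * a k j) - (\<Sum>k<n. a i k * mat_id k j)
      + (\<Sum>k<n. a i k * a k j)"
  proof -
    have e: "(mat_id i k - a i k) * (mat_id k j - a k j) =
        mat_id i k * mat_id k j - mat_id i k * a k j - a i k * mat_id k j + a i k * a k j" for k
      by (simp add: algebra_simps)
    show ?thesis unfolding H mat_mult_def e by (simp only: sum.distrib sum_subtractf)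
  qed
  also have "(\<Sum>k<n. mat_id i k * mat_id k j) = mat_id i j"
    using assms(1) unfolding mat_id_def by (rule sum_delta_l)
  also have "(\<Sum>k<n. mat_id i k * a k j) = a i j"
    using assms(1) unfolding mat_id_def by (rule sum_delta_l)
  also have "(\<Sum>k<n. a i k * mat_id k j) = a i j"
    using assms(2) unfolding mat_id_def by (rule sum_delta_r)
  also have "(\<Sum>k<n. a i k * a k j) = scaleR (c * c) (w i * (\<Sum>k<n. cnj (w k) * w k) * cnj (w j))"
  proof -
    have e: "a i k * a k j = scaleR (c * c) (w i * (cnj (w k) * w k) * cnj (w j))" for k
      by (simp add: a_def mult.assoc)
    show ?thesis unfolding e by (simp only: sum_distrib_left sum_distrib_right scaleR_sum_right)
  qed
  also have "\<dots> = scaleR (c * c * (vec_norm n w)\<^sup>2) (w i * cnj (w j))"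
  proof -
    have "w i * of_real ((vec_norm n w)\<^sup>2) * cnj (w j) = of_real ((vec_norm n w)\<^sup>2) * (w i * cnj (w j))"
      by (simp only: of_real_quat_comm[symmetric] mult.assoc)
    then show ?thesis unfolding sum_cnj_self by (simp add: scaleR_conv_of_real mult.assoc)
  qed
  also have "c * c * (vec_norm n w)\<^sup>2 = 2 * c"
    by (cases "vec_norm n w = 0") (simp_all add: c_def power2_eq_square)
  finally have "mat_mult n (hh n w) (hh n w) i j = mat_id i j - a i j - a i j + scaleR (2 * c) (w i * cnj (w j))" .
  also have "\<dots> = mat_id i j"
  proof -
    have "scaleR (2 * c) (w i * cnj (w j)) = scaleR c (w i * cnj (w j)) + scaleR c (w i * cnj (w j))"
      by (simp add: scaleR_add_left[symmetric])
    then show ?thesis unfolding a_def by simp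
  qed
  finally show ?thesis .
qed

lemma unitary_hh: "unitary n (hh n w)"
  unfolding unitary_def hh_adj mat_eq_def using hh_sq by auto

lemma inner_cnj_mult: "inner a b = quat.Re (cnj a * b)"
  by (simp add: inner_quat_def)

lemma hh_swap:
  assumes xy: "vec_norm n x = vec_norm n y" and r: "(\<Sum>k<n. cnj (x k) * y k) = of_real r" and i: "i < n"
  shows "mat_vec n (hh n (\<lambda>k. x k - y k)) x i = y i"
proof -
  define w where "w k = x k - y k" for k
  have wdef: "(\<lambda>k. x k - y k) = w" by (rule ext) (simp add: w_def)
  define X where "X = vec_norm n x"
  define c where "c = 2 / (vec_norm n w)\<^sup>2"
  have "mat_vec n (hh n w) x i = (\<Sum>k<n. mat_id i k * x k) - (\<Sum>k<n. scaleR c (w i * cnj (w k)) * x k)"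
    unfolding mat_vec_def hh_def c_def by (simp only: left_diff_distrib sum_subtractf)
  also have "(\<Sum>k<n. mat_id i k * x k) = x i" using i unfolding mat_id_def by (rule sum_delta_l)
  also have "(\<Sum>k<n. scaleR c (w i * cnj (w k)) * x k) = scaleR c (w i * (\<Sum>k<n. cnj (w k) * x k))"
    by (simp add: sum_distrib_left scaleR_sum_right mult.assoc)
  also have "(\<Sum>k<n. cnj (w k) * x k) = of_real (X\<^sup>2 - r)"
  proof -
    have "(\<Sum>k<n. cnj (w k) * x k) = (\<Sum>k<n. cnj (x k) * x k) - (\<Sum>k<n. cnj (y k) * x k)"
      by (simp add: w_def left_diff_distrib sum_subtractf)
    also have "(\<Sum>k<n. cnj (y k) * x k) = cnj (\<Sum>k<n. cnj (x k) * y k)"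
      by (simp add: cnj_sum cnj_mult)
    finally show ?thesis using r by (simp add: sum_cnj_self X_def)
  qed
  finally have Hx: "mat_vec n (hh n w) x i = x i - scaleR c (w i * of_real (X\<^sup>2 - r))" .
  have vr: "vinner n x y = r"
  proof -
    have "vinner n x y = quat.Re (\<Sum>k<n. cnj (x k) * y k)"
      by (simp only: vinner_def inner_cnj_mult Re_sum)
    then show ?thesis using r by simp
  qed
  have nw: "(vec_norm n w)\<^sup>2 = 2 * (X\<^sup>2 - r)"
    using vec_norm_diff_sq[of n x y] xy vr unfolding wdef by (simp add: X_def)
  show ?thesis unfolding wdef
  proof (cases "X\<^sup>2 - r = 0")
    case True
    then have "vec_norm n w = 0" using nw by simp
    then have "w i = 0" using i by (simp add: vec_norm_eq_0)
    then show "mat_vec n (hh n w) x i = y i" using Hx by (simp add: w_def)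
  next
    case False
    have "c * (X\<^sup>2 - r) = 1" using False by (simp add: c_def nw)
    have "scaleR c (w i * of_real (X\<^sup>2 - r)) = scaleR (c * (X\<^sup>2 - r)) (w i)"
      by (simp add: of_real_def)
    also have "\<dots> = w i" using \<open>c * (X\<^sup>2 - r) = 1\<close> by simp
    finally show "mat_vec n (hh n w) x i = y i" using Hx by (simp add: w_def)
  qed
qed

definition diagph :: "quat \<Rightarrow> nat \<Rightarrow> nat \<Rightarrow> quat" where
  "diagph g = (\<lambda>i j. if i = j then (if i = 0 then g else 1) else 0)"

lemma unitary_diagph:
  assumes "norm g = 1" shows "unitary n (diagph g)"
proof -
  have g1: "cnj g * g = 1" "g * cnj g = 1"
    using assms by (simp_all add: cnj_mult_self_real mult_cnj_self_real)
  have "mat_mult n (mat_adj (diagph g)) (diagph g) i j = mat_id i j" if "i < n" "j < n" for i j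
  proof -
    have "mat_mult n (mat_adj (diagph g)) (diagph g) i j = (\<Sum>k<n. mat_adj (diagph g) i k * (if k = j then (if k = 0 then g else 1) else 0))"
      by (simp add: mat_mult_def diagph_def)
    also have "\<dots> = mat_adj (diagph g) i j * (if j = 0 then g else 1)"
      by (rule trans[OF sum.cong[OF refl] sum_delta_r[OF that(2), of "\<lambda>k. mat_adj (diagph g) i k * (if k = 0 then g else 1)"]]) auto
    finally show ?thesis using g1 by (auto simp: mat_adj_def diagph_def mat_id_def)
  qed
  moreover have "mat_mult n (diagph g) (mat_adj (diagph g)) i j = mat_id i j" if "i < n" "j < n" for i j
  proof -
    have "mat_mult n (diagph g) (mat_adj (diagph g)) i j = (\<Sum>k<n. (if i = k then (if i = 0 then g else 1) else 0) * mat_adj (diagph g) k j)"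
      by (simp add: mat_mult_def diagph_def)
    also have "\<dots> = (if i = 0 then g else 1) * mat_adj (diagph g) i j"
      by (rule trans[OF sum.cong[OF refl] sum_delta_l[OF that(1), of "\<lambda>k. (if i = 0 then g else 1) * mat_adj (diagph g) k j"]]) auto
    finally show ?thesis using g1 by (auto simp: mat_adj_def diagph_def mat_id_def)
  qed
  ultimately show ?thesis by (simp add: unitary_def mat_eq_def)
qed

definition phase :: "quat \<Rightarrow> quat" where
  "phase z = (if z = 0 then 1 else scaleR (1 / norm z) z)"

lemma phase_norm: "norm (phase z) = 1"
  by (simp add: phase_def)

lemma phase_cnj_mult: "cnj (phase z) * z = of_real (norm z)"
proof (cases "z = 0")
  case True then show ?thesis by (simp add: phase_def)
next
  case False
  then have "cnj (phase z) * z = scaleR (1 / norm z) (of_real ((norm z)\<^sup>2))"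
    by (simp add: phase_def cnj_mult_self_real)
  also have "\<dots> = of_real (norm z)" using False by (simp add: of_real_def power2_eq_square)
  finally show ?thesis .
qed

lemma sum_single0: "0 < (n::nat) \<Longrightarrow> (\<Sum>l<n. f l * (if l = 0 then g else 0)) = (f 0 * g :: quat)"
proof -
  assume n: "0 < n"
  have "(\<Sum>l<n. f l * (if l = 0 then g else 0)) = (\<Sum>l<n. if l = 0 then f 0 * g else 0)"
    by (rule sum.cong) auto
  also have "\<dots> = f 0 * g" using n by simp
  finally show ?thesis .
qed

lemma unit_completion:
  assumes n: "1 \<le> n" and v: "vec_norm n v = 1"
  shows "\<exists>W. unitary n W \<and> (\<forall>k<n. W k 0 = v k)"
proof -
  define g where "g = phase (v 0)"
  define x where "x k = (if k = 0 then g else 0)" for k :: nat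
  have n0: "0 < n" using n by simp
  have xn: "vec_norm n x = 1"
  proof -
    have "(\<Sum>k<n. (norm (x k))\<^sup>2) = (\<Sum>k<n. if k = 0 then 1 else 0)"
      by (rule sum.cong) (auto simp: x_def g_def phase_norm)
    then show ?thesis using n0 by (simp add: vec_norm_def)
  qed
  have xr: "(\<Sum>k<n. cnj (x k) * v k) = of_real (norm (v 0))"
  proof -
    have "(\<Sum>k<n. cnj (x k) * v k) = (\<Sum>k<n. if k = 0 then cnj g * v 0 else 0)"
      by (rule sum.cong) (auto simp: x_def)
    then show ?thesis using n0 by (simp add: g_def phase_cnj_mult)
  qed
  define H where "H = hh n (\<lambda>k. x k - v k)"
  have Hx: "mat_vec n H x k = v k" if "k < n" for k
    unfolding H_def by (rule hh_swap[OF _ xr that]) (simp add: xn v)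
  define W where "W = mat_mult n H (diagph g)"
  have "unitary n W" unfolding W_def H_def
    by (intro unitary_mult unitary_hh unitary_diagph) (simp add: g_def phase_norm)
  moreover have "W k 0 = v k" if "k < n" for k
  proof -
    have "W k 0 = H k 0 * g" unfolding W_def mat_mult_def diagph_def
      using sum_single0[OF n0, of "H k" g] by (simp cong: if_cong)
    also have "\<dots> = mat_vec n H x k" unfolding mat_vec_def x_def
      using sum_single0[OF n0, of "H k" g] by simp
    also have "\<dots> = v k" by (rule Hx[OF that])
    finally show ?thesis .
  qed
  ultimately show ?thesis by blast
qed


lemma mat_eq_refl: "mat_eq n A A" by (simp add: mat_eq_def)
lemma mat_eq_sym: "mat_eq n A B \<Longrightarrow> mat_eq n B A" by (simp add: mat_eq_def)
lemma mat_eq_trans: "mat_eq n A B \<Longrightarrow> mat_eq n B C \<Longrightarrow> mat_eq n A C" by (simp add: mat_eq_def)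

lemma mat_id_mult_eq: "mat_eq n (mat_mult n (mat_mult n mat_id A) mat_id) A"
  by (simp add: mat_eq_def mat_mult_id_right mat_mult_id_left)

lemma sum_scaleR_quat: "(\<Sum>l<n. scaleR s (f l) * (g l :: quat)) = scaleR s (\<Sum>l<n. f l * g l)"
  by (simp add: scaleR_sum_right)

lemma decomp:
  fixes A U W :: "nat \<Rightarrow> nat \<Rightarrow> quat" and v :: "nat \<Rightarrow> quat"
  assumes n: "1 \<le> n" and U: "unitary n U" and W: "unitary n W"
    and Wv: "\<And>k. k < n \<Longrightarrow> W k 0 = v k"
    and Av: "\<And>i. i < n \<Longrightarrow> mat_vec n A v i = scaleR s (U i 0)"
    and rowA: "\<And>j. j < n \<Longrightarrow> (\<Sum>k<n. cnj (U k 0) * A k j) = scaleR s (cnj (v j))"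
  defines "M \<equiv> mat_mult n (mat_mult n (mat_adj U) A) W"
  shows "mat_eq n A (mat_mult n (mat_mult n U (block_diag (qreal s) (\<lambda>i j. M (Suc i) (Suc j)))) (mat_adj W))"
proof -
  have n0: "0 < n" using n by simp
  have UU: "mat_mult n (mat_adj U) U i j = mat_id i j" if "i < n" "j < n" for i j
    using U that by (simp add: unitary_def mat_eq_def)
  have WW: "mat_mult n (mat_adj W) W i j = mat_id i j" if "i < n" "j < n" for i j
    using W that by (simp add: unitary_def mat_eq_def)
  have row0: "mat_mult n (mat_adj U) A 0 l = scaleR s (cnj (v l))" if "l < n" for l
    using rowA[OF that] by (simp add: mat_mult_def mat_adj_def)
  have M0j: "M 0 j = scaleR s (mat_id 0 j)" if "j < n" for j
  proof -
    have "M 0 j = (\<Sum>l<n. scaleR s (cnj (v l)) * W l j)"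
      unfolding M_def mat_mult_def[of n _ W] by (rule sum.cong) (simp_all add: row0)
    also have "\<dots> = scaleR s (\<Sum>l<n. mat_adj W 0 l * W l j)"
      unfolding sum_scaleR_quat by (rule arg_cong[where f="scaleR s"], rule sum.cong) (simp_all add: mat_adj_def Wv)
    also have "\<dots> = scaleR s (mat_id 0 j)" using WW[OF n0 that] by (simp add: mat_mult_def)
    finally show ?thesis .
  qed
  have Mi0: "M i 0 = scaleR s (mat_id i 0)" if "i < n" for i
  proof -
    have "M i 0 = mat_vec n (mat_mult n (mat_adj U) A) v i"
      unfolding M_def mat_mult_def[of n _ W] mat_vec_def by (rule sum.cong) (simp_all add: Wv)
    also have "\<dots> = mat_vec n (mat_adj U) (mat_vec n A v) i" by (simp add: mat_vec_mult)
    also have "\<dots> = (\<Sum>k<n. mat_adj U i k * scaleR s (U k 0))"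
      unfolding mat_vec_def[of n "mat_adj U"] by (rule sum.cong) (simp_all add: Av)
    also have "\<dots> = scaleR s (\<Sum>k<n. mat_adj U i k * U k 0)"
      by (simp add: scaleR_sum_right)
    also have "\<dots> = scaleR s (mat_id i 0)" using UU[OF that n0] by (simp add: mat_mult_def)
    finally show ?thesis .
  qed
  have B: "mat_eq n (block_diag (qreal s) (\<lambda>i j. M (Suc i) (Suc j))) M"
    unfolding mat_eq_def
  proof (intro allI impI)
    fix i j assume ij: "i < n" "j < n"
    show "block_diag (qreal s) (\<lambda>i j. M (Suc i) (Suc j)) i j = M i j"
    proof (cases "i = 0")
      case True
      then show ?thesis using M0j[OF ij(2)]
        by (simp add: block_diag_def mat_id_def qreal_of_real scaleR_conv_of_real)
    next
      case False
      then show ?thesis using Mi0[OF ij(1)]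
        by (cases "j = 0") (simp_all add: block_diag_def mat_id_def)
    qed
  qed
  have "mat_mult n (mat_mult n U M) (mat_adj W) =
      mat_mult n (mat_mult n (mat_mult n U (mat_adj U)) A) (mat_mult n W (mat_adj W))"
    by (simp add: M_def mat_mult_assoc)
  moreover have "mat_eq n (mat_mult n (mat_mult n (mat_mult n U (mat_adj U)) A) (mat_mult n W (mat_adj W)))
      (mat_mult n (mat_mult n mat_id A) mat_id)"
    using U W unfolding unitary_def by (intro mat_eq_mult mat_eq_refl) auto
  ultimately have R: "mat_eq n (mat_mult n (mat_mult n U M) (mat_adj W)) A"
    using mat_id_mult_eq mat_eq_trans by metis
  have "mat_eq n (mat_mult n (mat_mult n U (block_diag (qreal s) (\<lambda>i j. M (Suc i) (Suc j)))) (mat_adj W))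
      (mat_mult n (mat_mult n U M) (mat_adj W))"
    by (intro mat_eq_mult mat_eq_refl B)
  then show ?thesis using R mat_eq_trans mat_eq_sym by metis
qed

lemma regular_cong:
  assumes sd: "slice_domain \<Omega>" and f: "regular \<Omega> f" and eq: "\<And>q. q \<in> \<Omega> \<Longrightarrow> f q = g q"
  shows "regular \<Omega> g"
  unfolding regular_iff_scr
proof
  fix J assume J: "J \<in> unit_sphere"
  have o: "open (US \<Omega> J)" using slice_domain_US[OF sd J] by simp
  show "scr J (US \<Omega> J) (\<lambda>p. g (sl J p))"
    unfolding scr_def
  proof
    fix p assume p: "p \<in> US \<Omega> J"
    obtain D where D: "((\<lambda>p. f (sl J p)) has_derivative D) (at p)" "D (1,0) + J * D (0,1) = 0"
      using f J p unfolding regular_iff_scr scr_def by blast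
    have "((\<lambda>p. g (sl J p)) has_derivative D) (at p)"
      by (rule has_derivative_transform_within_open[OF D(1) o p]) (simp add: eq US_def)
    then show "\<exists>D. ((\<lambda>p. g (sl J p)) has_derivative D) (at p) \<and> D (1,0) + J * D (0,1) = 0"
      using D(2) by blast
  qed
qed

lemma hh_real:
  "hh n (\<lambda>k. of_real (r k)) a m = of_real ((if a = m then 1 else 0) - (2 / (vec_norm n (\<lambda>k. of_real (r k)))\<^sup>2) * (r a * r m))"
proof -
  have "mat_id a m = (of_real (if a = m then 1 else 0) :: quat)" by (simp add: mat_id_def)
  moreover have "scaleR (2 / (vec_norm n (\<lambda>k. of_real (r k)))\<^sup>2) (of_real (r a) * cnj (of_real (r m)))
      = (of_real ((2 / (vec_norm n (\<lambda>k. of_real (r k)))\<^sup>2) * (r a * r m)) :: quat)"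
    by (simp only: cnj_of_real of_real_mult[symmetric] scaleR_conv_of_real)
  ultimately show ?thesis by (simp only: hh_def of_real_diff)
qed

lemma U_construct:
  fixes F :: "quat \<Rightarrow> nat \<Rightarrow> nat \<Rightarrow> quat" and tr :: "nat \<Rightarrow> real"
  assumes n: "1 \<le> n" and sd: "slice_domain \<Omega>" and reg: "mat_regular n \<Omega> F"
    and tn: "vec_norm n (\<lambda>k. of_real (tr k)) = 1" and un: "vec_norm n u = 1"
    and Tc: "\<And>q l. q \<in> \<Omega> \<Longrightarrow> l < n \<Longrightarrow> (\<Sum>k<n. of_real (tr k) * F q k l) = (\<Sum>k<n. of_real (tr k) * F q0 k l)"
    and Uc: "\<And>q l. q \<in> \<Omega> \<Longrightarrow> l < n \<Longrightarrow> (\<Sum>k<n. cnj (u k) * F q k l) = (\<Sum>k<n. cnj (u k) * F q0 k l)"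
  shows "\<exists>U \<beta>. unitary n U \<and> norm \<beta> = 1 \<and> (\<forall>k<n. U k 0 = u k * cnj \<beta>) \<and>
           (\<forall>a<n. \<forall>l<n. regular \<Omega> (\<lambda>q. mat_mult n (mat_adj U) (F q) a l))"
proof -
  have n0: "0 < n" using n by simp
  define t where "t k = (of_real (tr k) :: quat)" for k
  define \<tau> where "\<tau> = (\<Sum>k<n. cnj (t k) * u k)"
  define \<beta> where "\<beta> = phase \<tau>"
  have b1: "norm \<beta> = 1" by (simp add: \<beta>_def phase_norm)
  have bb: "\<beta> * cnj \<beta> = 1" using b1 by (simp add: mult_cnj_self_real)
  define x where "x k = t k * \<beta>" for k
  have xn: "vec_norm n x = 1"
    using tn b1 by (simp add: vec_norm_def x_def t_def norm_mult)
  have xr: "(\<Sum>k<n. cnj (x k) * u k) = of_real (norm \<tau>)"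
  proof -
    have "(\<Sum>k<n. cnj (x k) * u k) = cnj \<beta> * \<tau>"
      by (simp add: x_def \<tau>_def cnj_mult sum_distrib_left mult.assoc)
    then show ?thesis by (simp add: \<beta>_def phase_cnj_mult)
  qed
  define w where "w k = x k - u k" for k
  have wdef: "(\<lambda>k. x k - u k) = w" by (rule ext) (simp add: w_def)
  define H where "H = hh n w"
  have Hx: "mat_vec n H x k = u k" if "k < n" for k
    unfolding H_def wdef[symmetric] by (rule hh_swap[OF _ xr that]) (simp add: xn un)
  define e1 where "e1 k = (if k = 0 then 1 else (0::quat))" for k :: nat
  have e1n: "vec_norm n e1 = 1"
  proof -
    have "(\<Sum>k<n. (norm (e1 k))\<^sup>2) = (\<Sum>k<n. if k = 0 then 1 else 0)"
      by (rule sum.cong) (auto simp: e1_def)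
    then show ?thesis using n0 by (simp add: vec_norm_def)
  qed
  have e1r: "(\<Sum>k<n. cnj (e1 k) * t k) = of_real (tr 0)"
  proof -
    have "(\<Sum>k<n. cnj (e1 k) * t k) = (\<Sum>k<n. if k = 0 then t 0 else 0)"
      by (rule sum.cong) (auto simp: e1_def)
    then show ?thesis using n0 by (simp add: t_def)
  qed
  define r where "r k = (if k = 0 then 1 else 0) - tr k" for k
  have rdef: "(\<lambda>k. e1 k - t k) = (\<lambda>k. of_real (r k))"
    by (rule ext) (simp add: e1_def t_def r_def)
  define P where "P = hh n (\<lambda>k. e1 k - t k)"
  have Pe: "mat_vec n P e1 k = t k" if "k < n" for k
    unfolding P_def by (rule hh_swap[OF _ e1r that]) (simp add: e1n tn t_def)
  define U where "U = mat_mult n H P"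
  have unitU: "unitary n U" unfolding U_def H_def P_def by (intro unitary_mult unitary_hh)
  have U0: "U k 0 = u k * cnj \<beta>" if k: "k < n" for k
  proof -
    have P0: "P l 0 = t l" if "l < n" for l
    proof -
      have "mat_vec n P e1 l = P l 0" unfolding mat_vec_def e1_def
        using sum_single0[OF n0, of "P l" 1] by simp
      then show ?thesis using Pe[OF that] by simp
    qed
    have "U k 0 = (\<Sum>l<n. H k l * t l)"
      unfolding U_def mat_mult_def by (rule sum.cong) (simp_all add: P0)
    moreover have "(\<Sum>l<n. H k l * t l) * \<beta> = u k"
      using Hx[OF k] by (simp add: mat_vec_def x_def sum_distrib_right mult.assoc)
    ultimately have "U k 0 * \<beta> = u k" by simp
    then have "U k 0 * \<beta> * cnj \<beta> = u k * cnj \<beta>" by simp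
    then show ?thesis using bb by (simp add: mult.assoc)
  qed
  have adjU: "mat_adj U = mat_mult n P H"
    unfolding U_def by (simp add: mat_adj_mult H_def P_def hh_adj)
  define c where "c = 2 / (vec_norm n w)\<^sup>2"
  define K where "K l q = (\<Sum>k<n. cnj (w k) * F q k l)" for l q
  have Kc: "K l q = K l q0" if "q \<in> \<Omega>" "l < n" for l q
  proof -
    have "K l q = cnj \<beta> * (\<Sum>k<n. t k * F q k l) - (\<Sum>k<n. cnj (u k) * F q k l)" for q
      by (simp add: K_def w_def x_def cnj_mult t_def left_diff_distrib sum_subtractf sum_distrib_left mult.assoc)
    then show ?thesis using Tc[OF that] Uc[OF that] by (simp add: t_def)
  qed
  have HF: "mat_mult n H (F q) m l = F q m l - scaleR c (w m * K l q)" if "m < n" for m l q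
  proof -
    have "mat_mult n H (F q) m l = (\<Sum>k<n. mat_id m k * F q k l) - (\<Sum>k<n. scaleR c (w m * cnj (w k)) * F q k l)"
      unfolding mat_mult_def H_def hh_def c_def by (simp only: left_diff_distrib sum_subtractf)
    also have "(\<Sum>k<n. mat_id m k * F q k l) = F q m l" using that unfolding mat_id_def by (rule sum_delta_l)
    also have "(\<Sum>k<n. scaleR c (w m * cnj (w k)) * F q k l) = scaleR c (w m * K l q)"
      by (simp add: K_def sum_distrib_left scaleR_sum_right mult.assoc)
    finally show ?thesis .
  qed
  have regHF: "regular \<Omega> (\<lambda>q. mat_mult n H (F q) m l)" if "m < n" "l < n" for m l
  proof (rule regular_cong[OF sd])
    show "regular \<Omega> (\<lambda>q. F q m l - scaleR c (w m * K l q0))"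
      using reg that by (intro regular_diff regular_const) (simp add: mat_regular_def)
    fix q assume "q \<in> \<Omega>"
    then show "F q m l - scaleR c (w m * K l q0) = mat_mult n H (F q) m l"
      using HF[OF that(1)] Kc[OF _ that(2)] by simp
  qed
  have "regular \<Omega> (\<lambda>q. mat_mult n (mat_adj U) (F q) a l)" if "a < n" "l < n" for a l
  proof -
    have e0: "mat_mult n (mat_adj U) (F q) a l = (\<Sum>m<n. P a m * mat_mult n H (F q) m l)" for q
      by (simp only: adjU mat_mult_assoc) (simp only: mat_mult_def[of n P])
    have e1: "P a m = of_real ((if a = m then 1 else 0) - (2 / (vec_norm n (\<lambda>k. of_real (r k)))\<^sup>2) * (r a * r m))" for m
      unfolding P_def rdef by (rule hh_real)
    have e: "mat_mult n (mat_adj U) (F q) a l = (\<Sum>m<n. of_real ((if a = m then 1 else 0) - (2 / (vec_norm n (\<lambda>k. of_real (r k)))\<^sup>2) * (r a * r m)) * mat_mult n H (F q) m l)" for q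
      unfolding e0 e1 ..
    show ?thesis unfolding e
      by (intro regular_sum regular_real_left regHF that) simp
  qed
  then show ?thesis using unitU b1 U0 by blast
qed


lemma unitary_adj: "unitary n U \<Longrightarrow> unitary n (mat_adj U)"
  by (simp add: unitary_def)

lemma vec_norm_cnj: "vec_norm n (\<lambda>j. cnj (v j)) = vec_norm n v"
  by (simp add: vec_norm_def)

lemma row_lemma:
  assumes un: "vec_norm n u = 1" and vn: "vec_norm n v = 1" and s0: "s \<ge> 0"
    and op: "op_norm n A \<le> s" and Av: "\<And>i. i < n \<Longrightarrow> mat_vec n A v i = scaleR s (u i)"
    and j: "j < n"
  shows "(\<Sum>k<n. cnj (u k) * A k j) = scaleR s (cnj (v j))"
proof -
  define w where "w j = (\<Sum>k<n. cnj (u k) * A k j)" for j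
  define x where "x j = cnj (w j)" for j
  have swap: "(\<Sum>j<n. w j * y j) = (\<Sum>k<n. cnj (u k) * mat_vec n A y k)" for y
  proof -
    have "(\<Sum>j<n. w j * y j) = (\<Sum>j<n. \<Sum>k<n. cnj (u k) * (A k j * y j))"
      by (simp add: w_def sum_distrib_right mult.assoc)
    also have "\<dots> = (\<Sum>k<n. cnj (u k) * mat_vec n A y k)"
      by (subst sum.swap) (simp add: mat_vec_def sum_distrib_left)
    finally show ?thesis .
  qed
  have wn: "(vec_norm n w)\<^sup>2 \<le> s * vec_norm n w"
  proof -
    have "(vec_norm n w)\<^sup>2 = quat.Re (\<Sum>j<n. w j * x j)"
      by (simp only: x_def Re_sum Re_mult_cnj_self vec_norm_sq)
    also have "\<dots> = vinner n u (mat_vec n A x)"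
      by (simp only: swap Re_sum vinner_def inner_cnj_mult)
    also have "\<dots> \<le> vec_norm n u * vec_norm n (mat_vec n A x)" by (rule vinner_CS)
    also have "\<dots> \<le> 1 * (op_norm n A * vec_norm n x)" using un op_norm_bound[of n A x] by simp
    also have "\<dots> \<le> s * vec_norm n w"
    proof -
      have "vec_norm n x = vec_norm n w" unfolding vec_norm_def x_def by simp
      then show ?thesis using op vec_norm_nonneg[of n w] by (simp add: mult_right_mono)
    qed
    finally show ?thesis .
  qed
  have wle: "vec_norm n w \<le> s"
  proof (cases "vec_norm n w = 0")
    case True then show ?thesis using s0 by simp
  next
    case False
    then have "vec_norm n w > 0" using vec_norm_nonneg[of n w] by simp
    then show ?thesis using wn by (simp add: power2_eq_square)
  qed
  have wv: "vinner n w (\<lambda>j. scaleR s (cnj (v j))) = s * s"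
  proof -
    have "vinner n w (\<lambda>j. scaleR s (cnj (v j))) = s * quat.Re (\<Sum>j<n. w j * v j)"
      by (simp add: vinner_def inner_quat_Re Re_sum sum_distrib_left)
    also have "(\<Sum>j<n. w j * v j) = (\<Sum>k<n. cnj (u k) * scaleR s (u k))"
      unfolding swap by (rule sum.cong) (simp_all add: Av)
    also have "\<dots> = (\<Sum>k<n. of_real (s * (norm (u k))\<^sup>2))"
      by (rule sum.cong) (simp_all add: cnj_mult_self_real of_real_def)
    also have "quat.Re \<dots> = s * (vec_norm n u)\<^sup>2"
      by (simp only: Re_sum Re_of_real vec_norm_sq sum_distrib_left)
    finally show ?thesis using un by simp
  qed
  have "(vec_norm n (\<lambda>j. w j - scaleR s (cnj (v j))))\<^sup>2 \<le> 0"
  proof -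
    have "(vec_norm n (\<lambda>j. w j - scaleR s (cnj (v j))))\<^sup>2 =
        (vec_norm n w)\<^sup>2 - 2 * (s * s) + (vec_norm n (\<lambda>j. scaleR s (cnj (v j))))\<^sup>2"
      using vec_norm_diff_sq[of n w "\<lambda>j. scaleR s (cnj (v j))"] wv by simp
    also have "vec_norm n (\<lambda>j. scaleR s (cnj (v j))) = s"
      using s0 vn by (simp add: vec_norm_scaleR vec_norm_cnj)
    finally show ?thesis using wle vec_norm_nonneg[of n w]
      by (simp add: power2_eq_square mult_mono)
  qed
  then have "vec_norm n (\<lambda>j. w j - scaleR s (cnj (v j))) = 0" by simp
  then show ?thesis using j by (simp add: vec_norm_eq_0 w_def)
qed

definition am :: "nat \<Rightarrow> quat \<Rightarrow> real" where
  "am m z = (if m = 0 then quat.Re z else if m = 1 then - Im1 z else if m = 2 then - Im2 z else - Im3 z)"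

lemma cnj_decomp: "(\<Sum>m<4. ebase m * of_real (am m z)) = cnj z"
  by (simp add: sum4 ebase_def am_def quat_eq_iff qi_def qj_def qk_def of_real_def)

lemma real_rows:
  assumes sd: "slice_domain \<Omega>" and sym: "symmetric_set \<Omega>" and I: "I \<in> unit_sphere"
    and reg: "mat_regular n \<Omega> F" and j: "j < n"
    and const: "\<And>q. q \<in> \<Omega> \<Longrightarrow> (\<Sum>k<n. cnj (u k) * F q k j) = C"
    and q: "q \<in> \<Omega>" "q' \<in> \<Omega>" and m: "m < 4"
  shows "(\<Sum>k<n. of_real (am m (u k)) * F q k j) = (\<Sum>k<n. of_real (am m (u k)) * F q' k j)"
proof -
  define \<psi> where "\<psi> m q = (\<Sum>k<n. of_real (am m (u k)) * F q k j)" for m q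
  have r: "regular \<Omega> (\<psi> m)" if "m < 4" for m
    unfolding \<psi>_def[abs_def] using reg j
    by (intro regular_sum regular_real_left) (simp add: mat_regular_def)
  have s: "(\<Sum>m<4. ebase m * \<psi> m q) = C" if "q \<in> \<Omega>" for q
  proof -
    have "(\<Sum>m<4. ebase m * \<psi> m q) = (\<Sum>m<4. \<Sum>k<n. ebase m * of_real (am m (u k)) * F q k j)"
      by (simp add: \<psi>_def sum_distrib_left mult.assoc)
    also have "\<dots> = (\<Sum>k<n. (\<Sum>m<4. ebase m * of_real (am m (u k))) * F q k j)"
      by (subst sum.swap) (simp add: sum_distrib_right)
    also have "\<dots> = (\<Sum>k<n. cnj (u k) * F q k j)" by (simp add: cnj_decomp)
    finally show ?thesis using const[OF that] by simp
  qed
  have "\<psi> m q = \<psi> m q'" by (rule lemmaR[OF r I sym sd s q m])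
  then show ?thesis by (simp add: \<psi>_def)
qed


lemma exists_real_dir:
  assumes un: "vec_norm n u = 1"
  shows "\<exists>m<4. vec_norm n (\<lambda>k. of_real (am m (u k)) :: quat) > 0"
proof -
  obtain k where k: "k < n" "u k \<noteq> 0"
    using un by (metis vec_norm_eq_0 zero_neq_one)
  then have "quat.Re (u k) \<noteq> 0 \<or> Im1 (u k) \<noteq> 0 \<or> Im2 (u k) \<noteq> 0 \<or> Im3 (u k) \<noteq> 0"
    by (simp add: quat_eq_iff)
  then have "\<exists>m<4. am m (u k) \<noteq> 0"
  proof (elim disjE)
    assume "quat.Re (u k) \<noteq> 0" then show ?thesis by (intro exI[of _ 0]) (simp add: am_def)
  next
    assume "Im1 (u k) \<noteq> 0" then show ?thesis by (intro exI[of _ 1]) (simp add: am_def)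
  next
    assume "Im2 (u k) \<noteq> 0" then show ?thesis by (intro exI[of _ 2]) (simp add: am_def)
  next
    assume "Im3 (u k) \<noteq> 0" then show ?thesis by (intro exI[of _ 3]) (simp add: am_def)
  qed
  then obtain m where m: "m < 4" "am m (u k) \<noteq> 0" by blast
  have "0 < norm (of_real (am m (u k)) :: quat)" using m by simp
  also have "\<dots> \<le> vec_norm n (\<lambda>k. of_real (am m (u k)) :: quat)"
    by (rule norm_le_vec_norm[OF k(1), of "\<lambda>k. of_real (am m (u k))"])
  finally show ?thesis using m by blast
qed

lemma unitary_id: "unitary n mat_id"
proof -
  have a: "mat_adj mat_id = mat_id" by (intro ext) (simp add: mat_adj_def mat_id_cnj)
  show ?thesis unfolding unitary_def a mat_eq_def by (simp add: mat_mult_id_left)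
qed

theorem theorem3p8:
  fixes n :: nat and \<Omega> :: "quat set" and F :: "quat \<Rightarrow> nat \<Rightarrow> nat \<Rightarrow> quat"
    and I q0 :: quat
  assumes "n \<ge> 1"
    and "slice_domain \<Omega>" and "symmetric_set \<Omega>"
    and "mat_regular n \<Omega> F"
    and "I \<in> unit_sphere" and "q0 \<in> slice \<Omega> I"
    and "\<forall>q\<in>\<Omega>. op_norm n (F q) \<le> op_norm n (F q0)"
  shows "\<exists>U V G. unitary n U \<and> unitary n V \<and> mat_regular (n - 1) \<Omega> G \<and>
           (\<forall>q\<in>\<Omega>. mat_eq n (F q)
              (mat_mult n (mat_mult n U (block_diag (qreal (op_norm n (F q0))) (G q))) V))"
proof -
  note n1 = assms(1) and sd = assms(2) and sym = assms(3) and reg = assms(4)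
    and I = assms(5) and q0s = assms(6) and bnd = assms(7)
  have q0: "q0 \<in> \<Omega>" using q0s by (simp add: slice_def)
  define s where "s = op_norm n (F q0)"
  have bnd': "op_norm n (F q) \<le> s" if "q \<in> \<Omega>" for q using bnd that by (simp add: s_def)
  show ?thesis unfolding s_def[symmetric]
  proof (cases "s = 0")
    case True
    have F0: "F q i j = 0" if "q \<in> \<Omega>" "i < n" "j < n" for q i j
      using op_norm_zero_imp[of n "F q" i j] bnd'[OF that(1)] True that by simp
    have A: "mat_eq n (F q) (mat_mult n (mat_mult n mat_id (block_diag (qreal s) (\<lambda>i j. 0))) mat_id)"
      if "q \<in> \<Omega>" for q
      unfolding mat_eq_def
      using F0[OF that] True by (simp add: mat_mult_id_right mat_mult_id_left block_diag_def qreal_of_real)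
    have B: "mat_regular (n - 1) \<Omega> (\<lambda>q i j. 0)"
      by (simp add: mat_regular_def regular_const)
    show "\<exists>U V G. unitary n U \<and> unitary n V \<and> mat_regular (n - 1) \<Omega> G \<and>
           (\<forall>q\<in>\<Omega>. mat_eq n (F q) (mat_mult n (mat_mult n U (block_diag (qreal s) (G q))) V))"
      by (rule exI[of _ mat_id], rule exI[of _ mat_id], rule exI[of _ "\<lambda>q i j. 0"])
         (use unitary_id A B in simp)
  next
    case False
    then have spos: "s > 0" using op_norm_nonneg[of n "F q0"] by (simp add: s_def)
    obtain v0 where v0: "vec_norm n v0 \<le> 1" "vec_norm n (mat_vec n (F q0) v0) = s"
      using op_norm_attained[of n "F q0"] by (auto simp: s_def)
    have vn: "vec_norm n v0 = 1"
    proof -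
      have "s \<le> s * vec_norm n v0" using op_norm_bound[of n "F q0" v0] v0(2) by (simp add: s_def)
      then have "1 \<le> vec_norm n v0" using spos by simp
      then show ?thesis using v0(1) by simp
    qed
    have gc: "mat_vec n (F q) v0 k = mat_vec n (F q0) v0 k" if q: "q \<in> \<Omega>" and k: "k < n" for q k
    proof (rule max_step[OF sd I q0s _ _ q k, where g = "\<lambda>k q. mat_vec n (F q) v0 k"])
      fix k assume "k < n"
      then show "regular \<Omega> (\<lambda>q. mat_vec n (F q) v0 k)"
        unfolding mat_vec_def using reg by (intro regular_sum regular_mult_right) (simp add: mat_regular_def)
    next
      fix q assume q: "q \<in> \<Omega>"
      have "vec_norm n (mat_vec n (F q) v0) \<le> op_norm n (F q) * vec_norm n v0" by (rule op_norm_bound)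
      also have "\<dots> \<le> s" using bnd'[OF q] vn by simp
      finally show "vec_norm n (\<lambda>k. mat_vec n (F q) v0 k) \<le> vec_norm n (\<lambda>k. mat_vec n (F q0) v0 k)"
        using v0(2) by simp
    qed
    define c where "c = mat_vec n (F q0) v0"
    define u where "u k = scaleR (1 / s) (c k)" for k
    have un: "vec_norm n u = 1"
    proof -
      have "u = (\<lambda>k. scaleR (1 / s) (c k))" by (rule ext) (simp add: u_def)
      then show ?thesis using spos v0(2) by (simp add: vec_norm_scaleR c_def)
    qed
    have Fv: "mat_vec n (F q) v0 i = scaleR s (u i)" if "q \<in> \<Omega>" "i < n" for q i
      using gc[OF that] spos by (simp add: u_def c_def)
    have row: "(\<Sum>k<n. cnj (u k) * F q k j) = scaleR s (cnj (v0 j))" if "q \<in> \<Omega>" "j < n" for q j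
      by (rule row_lemma[OF un vn _ bnd'[OF that(1)] Fv[OF that(1)] that(2)]) (use spos in simp)
    obtain m0 where m0: "m0 < 4" and Lpos: "vec_norm n (\<lambda>k. of_real (am m0 (u k)) :: quat) > 0"
      using exists_real_dir[OF un] by blast
    define L where "L = vec_norm n (\<lambda>k. of_real (am m0 (u k)) :: quat)"
    define tr where "tr k = am m0 (u k) / L" for k
    have trq: "(\<lambda>k. of_real (tr k) :: quat) = (\<lambda>k. scaleR (1 / L) (of_real (am m0 (u k))))"
      by (rule ext) (simp add: tr_def of_real_def)
    have tn: "vec_norm n (\<lambda>k. of_real (tr k) :: quat) = 1"
      unfolding trq vec_norm_scaleR using Lpos by (simp add: L_def)
    have Tc: "(\<Sum>k<n. of_real (tr k) * F q k l) = (\<Sum>k<n. of_real (tr k) * F q0 k l)"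
      if "q \<in> \<Omega>" "l < n" for q l
    proof -
      have e: "(\<Sum>k<n. of_real (tr k) * F q k l) = scaleR (1 / L) (\<Sum>k<n. of_real (am m0 (u k)) * F q k l)" for q
        by (simp add: tr_def scaleR_sum_right of_real_def)
      have "(\<Sum>k<n. of_real (am m0 (u k)) * F q k l) = (\<Sum>k<n. of_real (am m0 (u k)) * F q0 k l)"
        by (rule real_rows[OF sd sym I reg that(2) row[OF _ that(2)] that(1) q0 m0])
      then show ?thesis by (simp add: e)
    qed
    have Uc: "(\<Sum>k<n. cnj (u k) * F q k l) = (\<Sum>k<n. cnj (u k) * F q0 k l)"
      if "q \<in> \<Omega>" "l < n" for q l
      using row[OF that(1) that(2)] row[OF q0 that(2)] by simp
    obtain U \<beta> where U: "unitary n U" "norm \<beta> = 1" "\<forall>k<n. U k 0 = u k * cnj \<beta>"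
      "\<forall>a<n. \<forall>l<n. regular \<Omega> (\<lambda>q. mat_mult n (mat_adj U) (F q) a l)"
      using U_construct[OF n1 sd reg tn un Tc Uc] by blast
    define v' where "v' k = v0 k * cnj \<beta>" for k
    have v'n: "vec_norm n v' = 1"
      using vn U(2) by (simp add: vec_norm_def v'_def norm_mult)
    obtain W where W: "unitary n W" "\<forall>k<n. W k 0 = v' k"
      using unit_completion[OF n1 v'n] by blast
    define M where "M q = mat_mult n (mat_mult n (mat_adj U) (F q)) W" for q
    have dec: "mat_eq n (F q) (mat_mult n (mat_mult n U (block_diag (qreal s) (\<lambda>i j. M q (Suc i) (Suc j)))) (mat_adj W))"
      if q: "q \<in> \<Omega>" for q
      unfolding M_def
    proof (rule decomp[OF n1 U(1) W(1)])
      show "\<And>k. k < n \<Longrightarrow> W k 0 = v' k" using W(2) by blast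
    next
      fix i assume i: "i < n"
      have "mat_vec n (F q) v' i = mat_vec n (F q) v0 i * cnj \<beta>"
        by (simp add: mat_vec_def v'_def sum_distrib_right mult.assoc)
      also have "\<dots> = scaleR s (U i 0)" using Fv[OF q i] U(3) i by simp
      finally show "mat_vec n (F q) v' i = scaleR s (U i 0)" .
    next
      fix j assume j: "j < n"
      have "(\<Sum>k<n. cnj (U k 0) * F q k j) = (\<Sum>k<n. \<beta> * (cnj (u k) * F q k j))"
        by (rule sum.cong) (simp_all add: U(3) cnj_mult mult.assoc)
      also have "\<dots> = \<beta> * scaleR s (cnj (v0 j))" by (simp add: sum_distrib_left[symmetric] row[OF q j])
      also have "\<dots> = scaleR s (cnj (v' j))" by (simp add: v'_def cnj_mult)
      finally show "(\<Sum>k<n. cnj (U k 0) * F q k j) = scaleR s (cnj (v' j))" .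
    qed
    have regG: "mat_regular (n - 1) \<Omega> (\<lambda>q i j. M q (Suc i) (Suc j))"
      unfolding mat_regular_def M_def mat_mult_def[of n _ W]
    proof (intro allI impI)
      fix i j assume "i < n - 1" "j < n - 1"
      then have "Suc i < n" by simp
      then show "regular \<Omega> (\<lambda>q. \<Sum>k<n. mat_mult n (mat_adj U) (F q) (Suc i) k * W k (Suc j))"
        using U(4) by (intro regular_sum regular_mult_right) simp
    qed
    show "\<exists>U V G. unitary n U \<and> unitary n V \<and> mat_regular (n - 1) \<Omega> G \<and>
           (\<forall>q\<in>\<Omega>. mat_eq n (F q) (mat_mult n (mat_mult n U (block_diag (qreal s) (G q))) V))"
      by (rule exI[of _ U], rule exI[of _ "mat_adj W"], rule exI[of _ "\<lambda>q i j. M q (Suc i) (Suc j)"])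
         (use U(1) unitary_adj[OF W(1)] regG dec in simp)
  qed
qed


end
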